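(* Let $C_n=\{x_0,\dots,x_{n-1}\}$, $n\ge3$, be a digital cycle and $f:C_n\to C_n$ continuous. Then (i) $L(f)\in\{0,1,2\}$. (ii) If moreover $C_n\subset\mathbb Z^m$ with $m\le3$ and the adjacency of $C_n$ is the $c_1$-adjacency, then $\bar L(f)=L(f)$ when $n\neq4$, and $\bar L(f)=1$ when $n=4$.
   Context: A digital image is a set with a symmetric irreflexive adjacency relation; write $x\leftrightarrow y$ for adjacent and $x\Leftrightarrow y$ for adjacent or equal; a map is continuous if $x\leftrightarrow y$ implies $f(x)\Leftrightarrow f(y)$. A digital cycle of $n$ points is an image $C_n=\{x_0,\dots,x_{n-1}\}$ of $n$ distinct points in which $x_i\leftrightarrow x_j$ iff $j\equiv i\pm1\pmod n$. On $\mathbb Z^m$, $c_1$-adjacency means differing by $\pm1$ in exactly one coordinate. Simplicial homology: a $q$-simplex is a set of $q+1$ pairwise adjacent points; $C_q(X)$ is free abelian on ordered $q$-simplices $\langle x_0,\dots,x_q\rangle$ modulo $\langle x_{\rho(0)},\dots,x_{\rho(q)}\rangle=\operatorname{sgn}(\rho)\langle x_0,\dots,x_q\rangle$, with $\partial\langle x_0,\dots,x_q\rangle=\sum_i(-1)^i\langle x_0,\dots,\widehat{x_i},\dots,x_q\rangle$; $f_q\langle p_0,\dots,p_q\rangle=\langle f(p_0),\dots,f(p_q)\rangle$ (or $0$ if fewer than $q+1$ distinct points), inducing $f_{*,q}$ on $H_q$; $L(f)=\sum_q(-1)^q\operatorname{tr}(f_{*,q})$ with traces on $H_q\otimes\mathbb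 Q$. Cubical homology (for $X\subset\mathbb Z^m$ with $c_1$): elementary intervals $\{a,a+1\}$ (nondegenerate) or $\{a\}$; elementary cube $\sigma=t_1\times\dots\times t_m$, dimension $q$ = number of nondegenerate factors; $\bar C_q(X)$ is free abelian on $q$-cubes contained in $X$; with $A_i\sigma,B_i\sigma$ obtained by replacing $t_i$ by $\{\min t_i\}$, $\{\max t_i\}$ and $j_1<\dots<j_q$ the nondegenerate indices, $\partial\sigma=\sum_{i=1}^q(-1)^i(A_{j_i}\sigma-B_{j_i}\sigma)$. For continuous $f$, $\bar f_q(\sigma)=0$ if $f(\sigma)$ is not a $q$-cube; otherwise, with $\tau=f(\sigma)$ and $\sigma,\tau$ identified with $\{0,1\}^q$ via nondegenerate coordinates, $f|_\sigma$ is $(x_i)\mapsto(y_i)$ with $y_i\in\{x_{\pi(i)},1-x_{\pi(i)}\}$ for a permutation $\pi$, and $\bar f_q(\sigma)=\operatorname{sgn}(\pi)(-1)^r\tau$, $r$ the number of reflected coordinates. For $m\le4$ this is a known chain map inducing $\bar f_{*,q}$ on $\bar H_q$; $\bar L(f)=\sum_q(-1)^q\operatorname{tr}(\bar f_{*,q})$, traces on $\bar H_q\otimes\mathbb Q$. *)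

theory Defs
  imports Complex_Main "HOL-Combinatorics.Permutations"
begin

text \<open>A digital image is a set X with an adjacency relation adj (only its restriction to X matters).\<close>

definition digital_continuous :: "'a set \<Rightarrow> ('a \<Rightarrow> 'a \<Rightarrow> bool) \<Rightarrow> ('a \<Rightarrow> 'a) \<Rightarrow> bool" where
  "digital_continuous X adj f \<longleftrightarrow>
     f ` X \<subseteq> X \<and> (\<forall>u\<in>X. \<forall>v\<in>X. adj u v \<longrightarrow> f u = f v \<or> adj (f u) (f v))"

definition digital_cycle :: "'a set \<Rightarrow> ('a \<Rightarrow> 'a \<Rightarrow> bool) \<Rightarrow> nat \<Rightarrow> (nat \<Rightarrow> 'a) \<Rightarrow> bool" where
  "digital_cycle X adj n x \<longleftrightarrow>
     inj_on x {..<n} \<and> X = x ` {..<n} \<and>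
     (\<forall>i<n. \<forall>j<n. adj (x i) (x j) \<longleftrightarrow> (j = Suc i mod n \<or> i = Suc j mod n))"

text \<open>c_1 adjacency on Z^m, points of Z^m represented as integer lists of length m.\<close>
definition c1_adj :: "int list \<Rightarrow> int list \<Rightarrow> bool" where
  "c1_adj u v \<longleftrightarrow> length u = length v \<and>
     (\<exists>k<length u. \<bar>u ! k - v ! k\<bar> = 1 \<and> (\<forall>i<length u. i \<noteq> k \<longrightarrow> u ! i = v ! i))"

definition lincomb :: "('c \<Rightarrow> rat) list \<Rightarrow> (nat \<Rightarrow> rat) \<Rightarrow> 'c \<Rightarrow> rat" where
  "lincomb vs a = (\<lambda>x. \<Sum>i<length vs. a i * (vs ! i) x)"

definition lin_indep :: "('c \<Rightarrow> rat) list \<Rightarrow> bool" where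
  "lin_indep vs \<longleftrightarrow> (\<forall>a. lincomb vs a = (\<lambda>_. 0) \<longrightarrow> (\<forall>i<length vs. a i = 0))"

text \<open>Trace of the map induced by Phi on the quotient space Z/B (B a subspace of Z, both
  invariant under Phi): take a basis bs of B, extend it by zs to a basis of Z; the classes
  of zs form a basis of Z/B, and the trace is the sum of the diagonal coefficients.\<close>
definition quot_trace :: "('c \<Rightarrow> rat) set \<Rightarrow> ('c \<Rightarrow> rat) set \<Rightarrow> (('c \<Rightarrow> rat) \<Rightarrow> ('c \<Rightarrow> rat)) \<Rightarrow> rat" where
  "quot_trace Z B Phi = (SOME t. \<exists>bs zs A.
      lin_indep (bs @ zs) \<and> range (lincomb bs) = B \<and> range (lincomb (bs @ zs)) = Z \<and>
      (\<forall>j<length zs. Phi (zs ! j) = lincomb (bs @ zs) (A j)) \<and>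
      t = (\<Sum>j<length zs. A j (length bs + j)))"

text \<open>cells q: basis of the q-chains; bd q s t: coefficient of t in the boundary of s (s a q-cell);
  fc q s t: coefficient of t in the image of s under the chain map.\<close>

definition chains :: "(nat \<Rightarrow> 'c set) \<Rightarrow> nat \<Rightarrow> ('c \<Rightarrow> rat) set" where
  "chains cells q = {c. \<forall>s. s \<notin> cells q \<longrightarrow> c s = 0}"

definition dmap :: "(nat \<Rightarrow> 'c set) \<Rightarrow> (nat \<Rightarrow> 'c \<Rightarrow> 'c \<Rightarrow> rat) \<Rightarrow> nat \<Rightarrow> ('c \<Rightarrow> rat) \<Rightarrow> 'c \<Rightarrow> rat" where
  "dmap cells bd q c = (\<lambda>t. if 0 < q \<and> t \<in> cells (q - 1) then (\<Sum>s\<in>cells q. c s * bd q s t) else 0)"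

definition fmap :: "(nat \<Rightarrow> 'c set) \<Rightarrow> (nat \<Rightarrow> 'c \<Rightarrow> 'c \<Rightarrow> rat) \<Rightarrow> nat \<Rightarrow> ('c \<Rightarrow> rat) \<Rightarrow> 'c \<Rightarrow> rat" where
  "fmap cells fc q c = (\<lambda>t. if t \<in> cells q then (\<Sum>s\<in>cells q. c s * fc q s t) else 0)"

definition cycles :: "(nat \<Rightarrow> 'c set) \<Rightarrow> (nat \<Rightarrow> 'c \<Rightarrow> 'c \<Rightarrow> rat) \<Rightarrow> nat \<Rightarrow> ('c \<Rightarrow> rat) set" where
  "cycles cells bd q = {c \<in> chains cells q. dmap cells bd q c = (\<lambda>_. 0)}"

definition boundaries :: "(nat \<Rightarrow> 'c set) \<Rightarrow> (nat \<Rightarrow> 'c \<Rightarrow> 'c \<Rightarrow> rat) \<Rightarrow> nat \<Rightarrow> ('c \<Rightarrow> rat) set" where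
  "boundaries cells bd q = dmap cells bd (Suc q) ` chains cells (Suc q)"

text \<open>Lefschetz number: alternating sum of traces of induced maps on H_q (x) Q, q = 0..N.\<close>
definition lefschetz :: "(nat \<Rightarrow> 'c set) \<Rightarrow> (nat \<Rightarrow> 'c \<Rightarrow> 'c \<Rightarrow> rat) \<Rightarrow> (nat \<Rightarrow> 'c \<Rightarrow> 'c \<Rightarrow> rat) \<Rightarrow> nat \<Rightarrow> rat" where
  "lefschetz cells bd fc N =
     (\<Sum>q\<le>N. (-1) ^ q * quot_trace (cycles cells bd q) (boundaries cells bd q) (fmap cells fc q))"

definition simplices :: "'a set \<Rightarrow> ('a \<Rightarrow> 'a \<Rightarrow> bool) \<Rightarrow> nat \<Rightarrow> 'a set set" where
  "simplices X adj q = {s. s \<subseteq> X \<and> finite s \<and> card s = Suc q \<and> (\<forall>x\<in>s. \<forall>y\<in>s. x \<noteq> y \<longrightarrow> adj x y)}"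

text \<open>Chosen orientation of a simplex (the basis element of C_q is the ordered simplex orient s).\<close>
definition orient :: "'a set \<Rightarrow> 'a list" where
  "orient s = (SOME xs. distinct xs \<and> set xs = s)"

text \<open>Sign of the permutation taking the distinct list ys to its rearrangement xs
  (parity of the number of inversions of xs relative to ys).\<close>
definition relsign :: "'a list \<Rightarrow> 'a list \<Rightarrow> rat" where
  "relsign xs ys = (-1) ^ card {(i, j). i < j \<and> j < length xs \<and>
      (\<exists>k l. l < k \<and> k < length ys \<and> ys ! k = xs ! i \<and> ys ! l = xs ! j)}"

definition remove_nth :: "nat \<Rightarrow> 'a list \<Rightarrow> 'a list" where
  "remove_nth i xs = take i xs @ drop (Suc i) xs"

text \<open>boundary of <x_0,...,x_q> = sum_i (-1)^i <x_0,..,hat x_i,..,x_q>, rewritten in the chosen basis.\<close>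
definition simp_bd :: "nat \<Rightarrow> 'a set \<Rightarrow> 'a set \<Rightarrow> rat" where
  "simp_bd q s t = (\<Sum>i<length (orient s).
      if t = set (remove_nth i (orient s))
      then (-1) ^ i * relsign (remove_nth i (orient s)) (orient t) else 0)"

text \<open>f_q <p_0,...,p_q> = <f p_0,...,f p_q>, or 0 if fewer than q+1 distinct points.\<close>
definition simp_fc :: "('a \<Rightarrow> 'a) \<Rightarrow> nat \<Rightarrow> 'a set \<Rightarrow> 'a set \<Rightarrow> rat" where
  "simp_fc f q s t = (if card (f ` s) = Suc q \<and> t = f ` s
      then relsign (map f (orient s)) (orient t) else 0)"

definition simp_lefschetz :: "'a set \<Rightarrow> ('a \<Rightarrow> 'a \<Rightarrow> bool) \<Rightarrow> ('a \<Rightarrow> 'a) \<Rightarrow> rat" where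
  "simp_lefschetz X adj f = lefschetz (simplices X adj) simp_bd (simp_fc f) (card X)"

text \<open>Elementary cube with minimal vertex a and nondegenerate coordinate set J, as a set of lattice points.\<close>
definition cube_pts :: "int list \<Rightarrow> nat set \<Rightarrow> int list set" where
  "cube_pts a J = {p. length p = length a \<and>
     (\<forall>i<length a. if i \<in> J then p ! i = a ! i \<or> p ! i = a ! i + 1 else p ! i = a ! i)}"

definition cube_cells :: "nat \<Rightarrow> int list set \<Rightarrow> nat \<Rightarrow> (int list \<times> nat set) set" where
  "cube_cells m X q = {(a, J). length a = m \<and> J \<subseteq> {..<m} \<and> card J = q \<and> cube_pts a J \<subseteq> X}"

text \<open>boundary = sum_{i=1}^q (-1)^i (A_{j_i} - B_{j_i}), j_1 < ... < j_q the nondegenerate coordinates.\<close>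
definition cube_bd :: "nat \<Rightarrow> int list \<times> nat set \<Rightarrow> int list \<times> nat set \<Rightarrow> rat" where
  "cube_bd q s t = (case s of (a, J) \<Rightarrow>
     (\<Sum>i<card J. let j = sorted_list_of_set J ! i in
        (-1) ^ (Suc i) * ((if t = (a, J - {j}) then 1 else 0)
                         - (if t = (a[j := a ! j + 1], J - {j}) then 1 else 0))))"

text \<open>Vertex of the cube (a,J) with nondegenerate coordinates x_i (i < card J) given by
  x_i = 1 iff i \<in> S.\<close>
definition cube_vertex :: "int list \<Rightarrow> nat set \<Rightarrow> nat set \<Rightarrow> int list" where
  "cube_vertex a J S = map (\<lambda>k. if k \<in> J \<and> (\<exists>i\<in>S. i < card J \<and> sorted_list_of_set J ! i = k)
                               then a ! k + 1 else a ! k) [0..<length a]"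

text \<open>f restricted to sigma, in nondegenerate coordinates, is (x_i) |-> (y_i) with
  y_i = x_{pi i} for i not in R and y_i = 1 - x_{pi i} for i in R.\<close>
definition cube_form :: "(int list \<Rightarrow> int list) \<Rightarrow> int list \<times> nat set \<Rightarrow> int list \<times> nat set
    \<Rightarrow> (nat \<Rightarrow> nat) \<Rightarrow> nat set \<Rightarrow> bool" where
  "cube_form f s t p R = (case s of (a, J) \<Rightarrow> case t of (b, K) \<Rightarrow>
     p permutes {..<card J} \<and> R \<subseteq> {..<card J} \<and>
     (\<forall>S\<subseteq>{..<card J}. f (cube_vertex a J S) =
         cube_vertex b K {i. i < card J \<and> ((p i \<in> S) \<noteq> (i \<in> R))}))"

definition cube_fc :: "(int list \<Rightarrow> int list) \<Rightarrow> nat \<Rightarrow> int list \<times> nat set \<Rightarrow> int list \<times> nat set \<Rightarrow> rat" where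
  "cube_fc f q s t = (if f ` cube_pts (fst s) (snd s) = cube_pts (fst t) (snd t) \<and>
        (\<exists>p R. cube_form f s t p R)
      then (SOME e. \<exists>p R. cube_form f s t p R \<and> e = of_int (sign p) * (-1) ^ card R)
      else 0)"

definition cube_lefschetz :: "nat \<Rightarrow> int list set \<Rightarrow> (int list \<Rightarrow> int list) \<Rightarrow> rat" where
  "cube_lefschetz m X f = lefschetz (cube_cells m X) cube_bd (cube_fc f) m"

end

theory Submission
  imports Defs
begin


lemma sum_lessThan_add: "(\<Sum>i<m+(k::nat). g i) = (\<Sum>i<m. g i) + (\<Sum>i<k. g (m+i))"
  by (induction k) (auto simp: algebra_simps)

lemma lincomb_append:
  "lincomb (bs @ zs) a = (\<lambda>x. lincomb bs a x + lincomb zs (\<lambda>i. a (length bs + i)) x)"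
proof (rule ext)
  fix x
  have "lincomb (bs @ zs) a x = (\<Sum>i<length bs + length zs. a i * ((bs @ zs) ! i) x)"
    by (simp add: lincomb_def)
  also have "\<dots> = (\<Sum>i<length bs. a i * ((bs @ zs) ! i) x) + (\<Sum>i<length zs. a (length bs + i) * ((bs @ zs) ! (length bs + i)) x)"
    by (rule sum_lessThan_add)
  also have "\<dots> = lincomb bs a x + lincomb zs (\<lambda>i. a (length bs + i)) x"
    by (simp add: lincomb_def nth_append)
  finally show "lincomb (bs @ zs) a x = lincomb bs a x + lincomb zs (\<lambda>i. a (length bs + i)) x" .
qed

lemma lincomb_Nil: "lincomb [] a = (\<lambda>_. 0)"
  by (simp add: lincomb_def)

lemma lincomb_single: "lincomb [w] a = (\<lambda>x. a 0 * w x)"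
  by (simp add: lincomb_def)

lemma lincomb_delta:
  assumes "k < length zs"
  shows "lincomb zs (\<lambda>i. if i = k then c else 0) = (\<lambda>x. c * (zs ! k) x)"
proof (rule ext)
  fix x
  have eq: "(\<lambda>i. (if i = k then c else 0) * (zs ! i) x) = (\<lambda>i. if i = k then c * (zs!k) x else 0)"
    by auto
  show "lincomb zs (\<lambda>i. if i = k then c else 0) x = c * (zs ! k) x"
    unfolding lincomb_def eq using assms by simp
qed

lemma lincomb_cong:
  assumes "\<And>i. i < length vs \<Longrightarrow> a i = b i"
  shows "lincomb vs a = lincomb vs b"
  unfolding lincomb_def using assms by auto

lemma nth_in_range_lincomb:
  assumes "k < length zs" shows "zs ! k \<in> range (lincomb zs)"
proof -
  have "zs ! k = lincomb zs (\<lambda>i. if i = k then 1 else 0)"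
    using lincomb_delta[OF assms, of 1] by simp
  thus ?thesis by blast
qed

lemma lincomb_add:
  "lincomb vs (\<lambda>i. a i + b i) = (\<lambda>x. lincomb vs a x + lincomb vs b x)"
  unfolding lincomb_def by (auto intro!: ext simp: algebra_simps sum.distrib)

lemma lincomb_scale:
  "lincomb vs (\<lambda>i. c * a i) = (\<lambda>x. c * lincomb vs a x)"
  unfolding lincomb_def by (rule ext) (simp add: sum_distrib_left mult.assoc)

lemma range_lincomb_add:
  "u \<in> range (lincomb vs) \<Longrightarrow> w \<in> range (lincomb vs) \<Longrightarrow> (\<lambda>x. u x + w x) \<in> range (lincomb vs)"
proof -
  assume "u \<in> range (lincomb vs)" "w \<in> range (lincomb vs)"
  then obtain a b where "u = lincomb vs a" "w = lincomb vs b" by auto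
  then have "(\<lambda>x. u x + w x) = lincomb vs (\<lambda>i. a i + b i)" by (simp add: lincomb_add)
  then show ?thesis by simp
qed

lemma range_lincomb_scale:
  "u \<in> range (lincomb vs) \<Longrightarrow> (\<lambda>x. c * u x) \<in> range (lincomb vs)"
proof -
  assume "u \<in> range (lincomb vs)"
  then obtain a where "u = lincomb vs a" by auto
  then have "(\<lambda>x. c * u x) = lincomb vs (\<lambda>i. c * a i)" by (simp add: lincomb_scale)
  then show ?thesis by simp
qed

lemma lincomb_sub_range:
  assumes "\<And>i. i < length vs \<Longrightarrow> vs ! i \<in> V"
    and z: "(\<lambda>_. 0) \<in> V"
    and add: "\<And>u w. u \<in> V \<Longrightarrow> w \<in> V \<Longrightarrow> (\<lambda>x. u x + w x) \<in> V"
    and sc: "\<And>u c. u \<in> V \<Longrightarrow> (\<lambda>x. c * u x) \<in> V"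
  shows "lincomb vs a \<in> V"
  using assms(1)
proof (induction vs arbitrary: a rule: rev_induct)
  case Nil
  then show ?case using z by (simp add: lincomb_Nil)
next
  case (snoc w vs)
  have h: "lincomb (vs @ [w]) a = (\<lambda>x. lincomb vs a x + a (length vs) * w x)"
    by (simp add: lincomb_append lincomb_single)
  have "lincomb vs a \<in> V"
    using snoc by (metis butlast_snoc length_append_singleton less_SucI nth_butlast)
  moreover have "w \<in> V" using snoc.prems[of "length vs"] by simp
  ultimately show ?case unfolding h using add sc by blast
qed

lemma not_in_span:
  assumes ind: "lin_indep (bs @ zs)" and k: "k < length zs"
  shows "zs ! k \<notin> range (lincomb bs)"
proof
  assume "zs ! k \<in> range (lincomb bs)"
  then obtain c where c: "zs ! k = lincomb bs c" by auto
  define a where "a = (\<lambda>i. if i < length bs then c i else if i = length bs + k then -1 else (0::rat))"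
  have "lincomb (bs @ zs) a = (\<lambda>x. lincomb bs c x + lincomb zs (\<lambda>i. if i = k then -1 else 0) x)"
    unfolding lincomb_append
    by (rule ext, rule arg_cong2[where f="(+)"], (rule fun_cong, rule lincomb_cong; auto simp: a_def)+)
  also have "\<dots> = (\<lambda>_. 0)" using lincomb_delta[OF k, of "-1"] c by auto
  finally have "a (length bs + k) = 0" using ind k unfolding lin_indep_def by auto
  thus False by (simp add: a_def)
qed

lemma quot_trace_eqI:
  assumes ex: "lin_indep (bs @ zs)" "range (lincomb bs) = B" "range (lincomb (bs @ zs)) = Z"
      "\<forall>j<length zs. Phi (zs ! j) = lincomb (bs @ zs) (A j)"
    and uniq: "\<And>bs zs A. lin_indep (bs @ zs) \<Longrightarrow> range (lincomb bs) = B \<Longrightarrow>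
        range (lincomb (bs @ zs)) = Z \<Longrightarrow> \<forall>j<length zs. Phi (zs ! j) = lincomb (bs @ zs) (A j) \<Longrightarrow>
        (\<Sum>j<length zs. A j (length bs + j)) = c"
  shows "quot_trace Z B Phi = c"
proof -
  let ?P = "\<lambda>t. \<exists>bs zs A.
      lin_indep (bs @ zs) \<and> range (lincomb bs) = B \<and> range (lincomb (bs @ zs)) = Z \<and>
      (\<forall>j<length zs. Phi (zs ! j) = lincomb (bs @ zs) (A j)) \<and>
      t = (\<Sum>j<length zs. A j (length bs + j))"
  have "?P (\<Sum>j<length zs. A j (length bs + j))" using ex by blast
  hence "?P (SOME t. ?P t)" by (rule someI)
  then show ?thesis unfolding quot_trace_def using uniq by blast
qed

lemma quot_trace_zero:
  assumes ind: "lin_indep bs0" and sp: "range (lincomb bs0) = B" and ZB: "Z = B"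
  shows "quot_trace Z B Phi = 0"
proof (rule quot_trace_eqI[of bs0 "[]"])
  show "lin_indep (bs0 @ [])" using ind by simp
  show "range (lincomb bs0) = B" by fact
  show "range (lincomb (bs0 @ [])) = Z" using sp ZB by simp
  show "\<forall>j<length []. Phi ([] ! j) = lincomb (bs0 @ []) (A j)" for A by simp
next
  fix bs zs A
  assume i: "lin_indep (bs @ zs)" and b: "range (lincomb bs) = B" and z: "range (lincomb (bs @ zs)) = Z"
  have "zs = []"
  proof (rule ccontr)
    assume "zs \<noteq> []"
    hence k: "0 < length zs" by simp
    have "zs ! 0 \<in> range (lincomb (bs @ zs))"
      using nth_in_range_lincomb[of "length bs" "bs @ zs"] k by (simp add: nth_append)
    hence "zs ! 0 \<in> range (lincomb bs)" using z b ZB by simp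
    thus False using not_in_span[OF i k] by simp
  qed
  thus "(\<Sum>j<length zs. A j (length bs + j)) = 0" by simp
qed

definition lfun :: "'c set \<Rightarrow> ('c \<Rightarrow> rat) \<Rightarrow> ('c \<Rightarrow> rat) \<Rightarrow> rat" where
  "lfun S g w = (\<Sum>s\<in>S. g s * w s)"

lemma lfun_add: "lfun S g (\<lambda>x. u x + w x) = lfun S g u + lfun S g w"
  by (simp add: lfun_def algebra_simps sum.distrib)
lemma lfun_scale: "lfun S g (\<lambda>x. c * u x) = c * lfun S g u"
  by (simp add: lfun_def algebra_simps sum_distrib_left)
lemma lfun_zero: "lfun S g (\<lambda>x. 0) = 0"
  by (simp add: lfun_def)

lemma quot_trace_one:
  assumes ex: "lin_indep (bs0 @ [z0])" "range (lincomb bs0) = B" "range (lincomb (bs0 @ [z0])) = Z"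
      "Phi z0 = lincomb (bs0 @ [z0]) a0"
    and ker: "\<And>w. w \<in> Z \<Longrightarrow> lfun S g w = 0 \<longleftrightarrow> w \<in> B"
    and nz: "\<exists>w\<in>Z. lfun S g w \<noteq> 0"
    and eig: "\<And>w. w \<in> Z \<Longrightarrow> lfun S g (Phi w) = c * lfun S g w"
  shows "quot_trace Z B Phi = c"
proof (rule quot_trace_eqI[of bs0 "[z0]" B Z Phi "\<lambda>_. a0"])
  show "lin_indep (bs0 @ [z0])" "range (lincomb bs0) = B" "range (lincomb (bs0 @ [z0])) = Z" by fact+
  show "\<forall>j<length [z0]. Phi ([z0] ! j) = lincomb (bs0 @ [z0]) a0" using ex(4) by simp
next
  fix bs zs A
  assume i: "lin_indep (bs @ zs)" and b: "range (lincomb bs) = B" and z: "range (lincomb (bs @ zs)) = Z"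
    and A: "\<forall>j<length zs. Phi (zs ! j) = lincomb (bs @ zs) (A j)"
  have zsZ: "zs ! k \<in> Z" if "k < length zs" for k
    using nth_in_range_lincomb[of "length bs + k" "bs @ zs"] that z by (simp add: nth_append)
  have zsB: "lfun S g (zs ! k) \<noteq> 0" if "k < length zs" for k
    using ker[OF zsZ[OF that]] not_in_span[OF i that] b by simp
  have linB: "lfun S g (lincomb bs a) = 0" for a
  proof -
    have "lincomb bs a = lincomb (bs @ zs) (\<lambda>i. if i < length bs then a i else 0)"
      unfolding lincomb_append by (auto intro!: ext simp: lincomb_def)
    hence "lincomb bs a \<in> Z" using z by (metis rangeI)
    moreover have "lincomb bs a \<in> B" using b by (metis rangeI)
    ultimately show ?thesis using ker by blast
  qed
  have ne: "zs \<noteq> []"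
  proof
    assume "zs = []"
    then have "Z = B" using b z by simp
    then show False using nz ker by auto
  qed
  have le: "length zs \<le> 1"
  proof (rule ccontr)
    assume "\<not> length zs \<le> 1"
    hence l2: "1 < length zs" by simp
    have l0: "0 < length zs" using l2 by linarith
    define p where "p = lfun S g (zs ! 0)"
    define q where "q = lfun S g (zs ! 1)"
    define w where "w = (\<lambda>x. q * (zs ! 0) x + (- p) * (zs ! 1) x)"
    have wZ: "w \<in> Z"
    proof -
      have "zs ! 0 \<in> range (lincomb (bs @ zs))" "zs ! 1 \<in> range (lincomb (bs @ zs))"
        using zsZ[of 0] zsZ[of 1] l2 z less_trans[OF zero_less_one l2] by simp_all
      then show ?thesis unfolding w_def z[symmetric] by (intro range_lincomb_add range_lincomb_scale)
    qed
    have "lfun S g w = 0" unfolding w_def lfun_add lfun_scale p_def q_def by simp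
    then have "w \<in> range (lincomb bs)" using ker wZ b by simp
    then obtain cc where cc: "w = lincomb bs cc" by auto
    define a where "a = (\<lambda>i. if i < length bs then cc i else if i = length bs then - q
       else if i = length bs + 1 then p else (0::rat))"
    have e1: "lincomb zs (\<lambda>i. a (length bs + i)) =
       (\<lambda>x. lincomb zs (\<lambda>i. if i = 0 then -q else 0) x + lincomb zs (\<lambda>i. if i = 1 then p else 0) x)"
      by (subst lincomb_add[symmetric], rule lincomb_cong) (auto simp: a_def)
    have "lincomb (bs @ zs) a = (\<lambda>x. lincomb bs cc x + lincomb zs (\<lambda>i. a (length bs + i)) x)"
      unfolding lincomb_append
      by (rule ext, rule arg_cong2[where f="(+)"], (rule fun_cong, rule lincomb_cong; auto simp: a_def)+)
    also have "\<dots> = (\<lambda>_. 0)"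
    proof -
      show ?thesis
        unfolding e1 lincomb_delta[OF l0] lincomb_delta[OF l2] cc[symmetric]
        by (rule ext) (simp add: w_def algebra_simps)
    qed
    finally have la: "lincomb (bs @ zs) a = (\<lambda>_. 0)" .
    have H: "\<forall>i<length bs + length zs. a i = 0" using i la unfolding lin_indep_def by simp
    have "a (length bs) = 0" using H l0 by simp
    moreover have "a (length bs + 1) = 0" using H l2 by simp
    ultimately have "q = 0" "p = 0" by (auto simp: a_def)
    thus False using zsB[OF l0] p_def by auto
  qed
  have l1: "length zs = 1" using ne le by (cases zs) auto
  have "Phi (zs ! 0) = lincomb (bs @ zs) (A 0)" using A l1 by auto
  also have "\<dots> = (\<lambda>x. lincomb bs (A 0) x + A 0 (length bs) * (zs ! 0) x)"
    unfolding lincomb_append using l1 by (cases zs) (auto simp: lincomb_single)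
  finally have "lfun S g (Phi (zs ! 0)) = A 0 (length bs) * lfun S g (zs ! 0)"
    by (simp add: lfun_add lfun_scale linB)
  moreover have "lfun S g (Phi (zs ! 0)) = c * lfun S g (zs ! 0)" using eig zsZ l1 by simp
  ultimately have Ac: "A 0 (length bs) = c" using zsB[of 0] l1 by simp
  have "{..<length zs} = {0}" using l1 by auto
  thus "(\<Sum>j<length zs. A j (length bs + j)) = c" using Ac by simp
qed


lemma nx_eq: "i < (n::nat) \<Longrightarrow> Suc i mod n = (if Suc i = n then 0 else Suc i)"
  by auto

lemma pv_eq: "k < (n::nat) \<Longrightarrow> (k + n - 1) mod n = (if k = 0 then n - 1 else k - 1)"
proof -
  assume k: "k < n"
  show ?thesis
  proof (cases "k = 0")
    case True
    have "n - 1 < n" using k by simp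
    then show ?thesis using True by simp
  next
    case False
    then have "k + n - 1 = (k - 1) + n" by simp
    then have "(k + n - 1) mod n = (k - 1) mod n" by simp
    also have "\<dots> = k - 1" using k by simp
    finally show ?thesis using False by simp
  qed
qed

lemma nx_pv_iff: "i < (n::nat) \<Longrightarrow> k < n \<Longrightarrow> (k = Suc i mod n) \<longleftrightarrow> (i = (k + n - 1) mod n)"
  using nx_eq[of i n] pv_eq[of k n] by auto

lemma nx_less: "0 < (n::nat) \<Longrightarrow> Suc i mod n < n" by simp
lemma pv_less: "0 < (n::nat) \<Longrightarrow> (k + n - 1) mod n < n" by simp

lemma bij_nx: "bij_betw (\<lambda>i. Suc i mod n) {..<n} {..<n}"
proof (cases "n = 0")
  case True then show ?thesis by simp
next
  case False
  show ?thesis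
  proof (rule bij_betw_byWitness[where f'="\<lambda>k. (k + n - 1) mod n"])
    show "\<forall>a\<in>{..<n}. (Suc a mod n + n - 1) mod n = a"
      using nx_pv_iff False by (metis lessThan_iff mod_less_divisor neq0_conv)
    show "\<forall>a'\<in>{..<n}. Suc ((a' + n - 1) mod n) mod n = a'"
      using nx_pv_iff False by (metis lessThan_iff mod_less_divisor neq0_conv)
    show "(\<lambda>i. Suc i mod n) ` {..<n} \<subseteq> {..<n}" using False by auto
    show "(\<lambda>k. (k + n - 1) mod n) ` {..<n} \<subseteq> {..<n}" using False by auto
  qed
qed

lemma sum_nx: "(\<Sum>i<n. g (Suc i mod n)) = (\<Sum>i<n. g i)"
  using sum.reindex_bij_betw[OF bij_nx, of g] by simp

lemma sum_delta_nx:
  assumes "k < (n::nat)"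
  shows "(\<Sum>i<n. if k = Suc i mod n then g i else 0) = g ((k + n - 1) mod n)"
proof -
  have "(\<Sum>i<n. if k = Suc i mod n then g i else 0) = (\<Sum>i<n. if i = (k + n - 1) mod n then g i else 0)"
    using nx_pv_iff[OF _ assms] by (intro sum.cong) auto
  also have "\<dots> = g ((k + n - 1) mod n)" using assms by (simp add: sum.delta)
  finally show ?thesis .
qed

definition Fw :: "nat \<Rightarrow> (nat \<Rightarrow> nat) \<Rightarrow> nat \<Rightarrow> nat \<Rightarrow> int" where
  "Fw n \<phi> i j = (if \<phi> (Suc i mod n) = Suc (\<phi> i) mod n \<and> j = \<phi> i then 1
     else if \<phi> i = Suc (\<phi> (Suc i mod n)) mod n \<and> j = \<phi> (Suc i mod n) then -1 else 0)"

definition Nf :: "nat \<Rightarrow> (nat \<Rightarrow> nat) \<Rightarrow> nat \<Rightarrow> int" where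
  "Nf n \<phi> j = (\<Sum>i<n. Fw n \<phi> i j)"

definition deg :: "nat \<Rightarrow> (nat \<Rightarrow> nat) \<Rightarrow> int" where
  "deg n \<phi> = Nf n \<phi> 0"

definition ccont :: "nat \<Rightarrow> (nat \<Rightarrow> nat) \<Rightarrow> bool" where
  "ccont n \<phi> \<longleftrightarrow> (\<forall>k<n. \<phi> k < n) \<and> (\<forall>i<n. \<phi> (Suc i mod n) = \<phi> i \<or>
     \<phi> (Suc i mod n) = Suc (\<phi> i) mod n \<or> \<phi> i = Suc (\<phi> (Suc i mod n)) mod n)"

lemma ind_sum_delta:
  assumes "a < (n::nat)"
  shows "(\<Sum>j<n. (if j = a then c else 0) * (h j :: int)) = c * h a"
proof -
  have "(\<Sum>j<n. (if j = a then c else 0) * h j) = (\<Sum>j<n. if j = a then c * h a else 0)"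
    by (intro sum.cong) auto
  also have "\<dots> = c * h a" using assms by (simp only: sum.delta finite_lessThan lessThan_iff if_True)
  finally show ?thesis .
qed

lemma nx2: "3 \<le> n \<Longrightarrow> a < (n::nat) \<Longrightarrow> Suc (Suc a mod n) mod n \<noteq> a"
proof -
  assume n: "3 \<le> n" and a: "a < n"
  show ?thesis
  proof (cases "Suc a = n")
    case True then show ?thesis using n by simp
  next
    case False
    then have "Suc a mod n = Suc a" using a by simp
    moreover have "Suc (Suc a) mod n \<noteq> a"
    proof (cases "Suc (Suc a) = n")
      case True then show ?thesis using n by simp
    next
      case F2: False
      have "Suc (Suc a) < n" using a False F2 by linarith
      then show ?thesis by simp
    qed
    ultimately show ?thesis by simp
  qed
qed

lemma Fw_bd:
  assumes n3: "3 \<le> n" and c: "ccont n \<phi>" and i: "i < n" and k: "k < n"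
  shows "(\<Sum>j<n. Fw n \<phi> i j * ((if k = Suc j mod n then 1 else 0) - (if k = j then 1 else 0))) =
         (if k = \<phi> (Suc i mod n) then 1 else 0) - (if k = \<phi> i then 1 else 0)"
proof -
  have n0: "0 < n" using i by simp
  have pi: "\<phi> i < n" and pn: "\<phi> (Suc i mod n) < n" using c i n0 unfolding ccont_def by auto
  let ?h = "\<lambda>j. ((if k = Suc j mod n then 1 else 0) - (if k = j then 1 else 0)) :: int"
  consider (f) "\<phi> (Suc i mod n) = Suc (\<phi> i) mod n"
    | (b) "\<phi> (Suc i mod n) \<noteq> Suc (\<phi> i) mod n" "\<phi> i = Suc (\<phi> (Suc i mod n)) mod n"
    | (z) "\<phi> (Suc i mod n) \<noteq> Suc (\<phi> i) mod n" "\<phi> i \<noteq> Suc (\<phi> (Suc i mod n)) mod n"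
    by blast
  then show ?thesis
  proof cases
    case f
    have nb: "\<phi> i \<noteq> Suc (\<phi> (Suc i mod n)) mod n" using nx2[OF n3 pi] f by simp
    have "(\<Sum>j<n. Fw n \<phi> i j * ?h j) = (\<Sum>j<n. (if j = \<phi> i then 1 else 0) * ?h j)"
      by (intro sum.cong) (use nx2[OF n3 pi] in \<open>auto simp: Fw_def f\<close>)
    also have "\<dots> = ?h (\<phi> i)" using ind_sum_delta[OF pi] by simp
    finally show ?thesis using f by simp
  next
    case b
    have "(\<Sum>j<n. Fw n \<phi> i j * ?h j) = (\<Sum>j<n. (if j = \<phi> (Suc i mod n) then -1 else 0) * ?h j)"
      by (intro sum.cong) (use nx2[OF n3 pn] in \<open>auto simp: Fw_def b\<close>)
    also have "\<dots> = - ?h (\<phi> (Suc i mod n))" using ind_sum_delta[OF pn] by simp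
    finally show ?thesis using b nx2[OF n3 pn] by auto
  next
    case z
    then have e: "\<phi> (Suc i mod n) = \<phi> i" using c i unfolding ccont_def by auto
    have "(\<Sum>j<n. Fw n \<phi> i j * ?h j) = 0"
      by (intro sum.neutral) (auto simp: Fw_def z)
    then show ?thesis using e by simp
  qed
qed

lemma Fw_sum_bound:
  assumes n3: "3 \<le> n" and c: "ccont n \<phi>" and i: "i < n"
  shows "\<bar>\<Sum>j<n. Fw n \<phi> i j\<bar> \<le> 1"
proof -
  have n0: "0 < n" using i by simp
  have pi: "\<phi> i < n" and pn: "\<phi> (Suc i mod n) < n" using c i n0 unfolding ccont_def by auto
  consider (f) "\<phi> (Suc i mod n) = Suc (\<phi> i) mod n"
    | (b) "\<phi> (Suc i mod n) \<noteq> Suc (\<phi> i) mod n" "\<phi> i = Suc (\<phi> (Suc i mod n)) mod n"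
    | (z) "\<phi> (Suc i mod n) \<noteq> Suc (\<phi> i) mod n" "\<phi> i \<noteq> Suc (\<phi> (Suc i mod n)) mod n"
    by blast
  then show ?thesis
  proof cases
    case f
    have nb: "\<phi> i \<noteq> Suc (\<phi> (Suc i mod n)) mod n" using nx2[OF n3 pi] f by simp
    have "(\<Sum>j<n. Fw n \<phi> i j) = (\<Sum>j<n. if j = \<phi> i then 1 else 0)"
      by (intro sum.cong) (use nx2[OF n3 pi] in \<open>auto simp: Fw_def f\<close>)
    then show ?thesis using pi by (simp add: sum.delta)
  next
    case b
    have "(\<Sum>j<n. Fw n \<phi> i j) = (\<Sum>j<n. if j = \<phi> (Suc i mod n) then -1 else 0)"
      by (intro sum.cong) (use nx2[OF n3 pn] in \<open>auto simp: Fw_def b\<close>)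
    then show ?thesis using pn by (simp add: sum.delta)
  next
    case z
    have "(\<Sum>j<n. Fw n \<phi> i j) = 0"
      by (intro sum.neutral) (auto simp: Fw_def z)
    then show ?thesis by simp
  qed
qed

lemma Nf_shift:
  assumes n3: "3 \<le> n" and c: "ccont n \<phi>" and k: "k < n"
  shows "Nf n \<phi> ((k + n - 1) mod n) = Nf n \<phi> k"
proof -
  let ?h = "\<lambda>j. ((if k = Suc j mod n then 1 else 0) - (if k = j then 1 else 0)) :: int"
  have "(\<Sum>j<n. Nf n \<phi> j * ?h j) = (\<Sum>j<n. \<Sum>i<n. Fw n \<phi> i j * ?h j)"
    unfolding Nf_def by (simp add: sum_distrib_right)
  also have "\<dots> = (\<Sum>i<n. \<Sum>j<n. Fw n \<phi> i j * ?h j)" by (rule sum.swap)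
  also have "\<dots> = (\<Sum>i<n. (if k = \<phi> (Suc i mod n) then 1 else 0) - (if k = \<phi> i then 1 else 0))"
    using Fw_bd[OF n3 c _ k] by (intro sum.cong) auto
  also have "\<dots> = 0"
    using sum_nx[of "\<lambda>i. (if k = \<phi> i then 1 else 0) :: int" n] by (simp add: sum_subtractf)
  finally have z: "(\<Sum>j<n. Nf n \<phi> j * ?h j) = 0" .
  have "(\<Sum>j<n. Nf n \<phi> j * ?h j) = (\<Sum>j<n. if k = Suc j mod n then Nf n \<phi> j else 0) -
      (\<Sum>j<n. if k = j then Nf n \<phi> j else 0)"
  proof -
    have "(\<Sum>j<n. Nf n \<phi> j * ?h j) = (\<Sum>j<n. (if k = Suc j mod n then Nf n \<phi> j else 0) -
      (if k = j then Nf n \<phi> j else 0))" by (intro sum.cong) auto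
    then show ?thesis by (simp add: sum_subtractf)
  qed
  also have "\<dots> = Nf n \<phi> ((k + n - 1) mod n) - Nf n \<phi> k"
    using sum_delta_nx[OF k] k by (simp add: sum.delta)
  finally show ?thesis using z by simp
qed

lemma Nf_const:
  assumes n3: "3 \<le> n" and c: "ccont n \<phi>"
  shows "k < n \<Longrightarrow> Nf n \<phi> k = deg n \<phi>"
proof (induction k)
  case 0 then show ?case by (simp add: deg_def)
next
  case (Suc k)
  have "((Suc k) + n - 1) mod n = k" using Suc.prems by simp
  then show ?case using Nf_shift[OF n3 c Suc.prems] Suc by simp
qed

lemma deg_range:
  assumes n3: "3 \<le> n" and c: "ccont n \<phi>"
  shows "deg n \<phi> \<in> {-1, 0, 1}"
proof -
  have "(\<Sum>j<n. Nf n \<phi> j) = of_nat n * deg n \<phi>"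
    using Nf_const[OF n3 c] by simp
  moreover have "(\<Sum>j<n. Nf n \<phi> j) = (\<Sum>i<n. \<Sum>j<n. Fw n \<phi> i j)"
    unfolding Nf_def by (rule sum.swap)
  moreover have "\<bar>\<Sum>i<n. \<Sum>j<n. Fw n \<phi> i j\<bar> \<le> (\<Sum>i<n. 1)"
    by (rule order_trans[OF sum_abs]) (intro sum_mono Fw_sum_bound[OF n3 c]; simp)
  ultimately have "\<bar>of_nat n * deg n \<phi>\<bar> \<le> of_nat n" by simp
  then have "of_nat n * \<bar>deg n \<phi>\<bar> \<le> of_nat n * 1" by (simp add: abs_mult)
  then have "\<bar>deg n \<phi>\<bar> \<le> 1" using n3 by (simp add: mult_le_cancel_left)
  then show ?thesis by auto
qed


definition dl :: "'c \<Rightarrow> 'c \<Rightarrow> rat" where "dl s = (\<lambda>t. if t = s then 1 else 0)"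

lemma chains_zero: "(\<lambda>_. 0) \<in> chains cells q"
  by (simp add: chains_def)
lemma chains_add: "u \<in> chains cells q \<Longrightarrow> w \<in> chains cells q \<Longrightarrow> (\<lambda>x. u x + w x) \<in> chains cells q"
  by (simp add: chains_def)
lemma chains_scale: "u \<in> chains cells q \<Longrightarrow> (\<lambda>x. c * u x) \<in> chains cells q"
  by (simp add: chains_def)

lemma dmap_add: "dmap cells bd q (\<lambda>x. u x + w x) = (\<lambda>t. dmap cells bd q u t + dmap cells bd q w t)"
  by (auto simp: dmap_def algebra_simps sum.distrib)
lemma dmap_scale: "dmap cells bd q (\<lambda>x. c * u x) = (\<lambda>t. c * dmap cells bd q u t)"
  by (auto simp: dmap_def sum_distrib_left mult.assoc)
lemma dmap_zero: "dmap cells bd q (\<lambda>_. 0) = (\<lambda>_. 0)"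
  by (auto simp: dmap_def)
lemma fmap_scale: "fmap cells fc q (\<lambda>x. c * u x) = (\<lambda>t. c * fmap cells fc q u t)"
  by (auto simp: fmap_def sum_distrib_left mult.assoc)

lemma chains_empty: "cells q = {} \<Longrightarrow> chains cells q = {\<lambda>_. 0}"
  by (auto simp: chains_def)

lemma trace_empty:
  assumes "cells q = {}" "cells (Suc q) = {}"
  shows "quot_trace (cycles cells bd q) (boundaries cells bd q) Phi = 0"
proof (rule quot_trace_zero[of "[]"])
  show "lin_indep []" by (simp add: lin_indep_def)
  have r: "range (lincomb []) = {(\<lambda>_. 0) :: 'a \<Rightarrow> rat}" by (simp add: lincomb_Nil)
  have c: "cycles cells bd q = {\<lambda>_. 0}"
    using assms(1) by (auto simp: cycles_def chains_empty dmap_zero)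
  have b: "boundaries cells bd q = {\<lambda>_. 0}"
    using assms(2) by (auto simp: boundaries_def chains_empty dmap_zero)
  show "range (lincomb []) = boundaries cells bd q" using r b by simp
  show "cycles cells bd q = boundaries cells bd q" using c b by simp
qed

lemma sum_first_two:
  assumes "\<And>q. 2 \<le> q \<Longrightarrow> f q = 0" "1 \<le> (N::nat)"
  shows "(\<Sum>q\<le>N. f q) = f 0 + (f 1 :: rat)"
  using assms(2)
proof (induction N)
  case 0 then show ?case by simp
next
  case (Suc N)
  show ?case
  proof (cases "N = 0")
    case True then show ?thesis by simp
  next
    case False
    then show ?thesis using Suc assms(1)[of "Suc N"] by simp
  qed
qed

lemma sum_first_three:
  assumes "\<And>q. 3 \<le> q \<Longrightarrow> f q = 0" "2 \<le> (N::nat)"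
  shows "(\<Sum>q\<le>N. f q) = f 0 + f 1 + (f 2 :: rat)"
  using assms(2)
proof (induction N)
  case 0 then show ?case by simp
next
  case (Suc N)
  show ?case
  proof (cases "N = 1")
    case True then show ?thesis by (simp add: numeral_2_eq_2)
  next
    case False
    then have "2 \<le> N" using Suc.prems by simp
    then show ?thesis using Suc assms(1)[of "Suc N"] by simp
  qed
qed

locale cyc =
  fixes n :: nat and cells :: "nat \<Rightarrow> 'c set" and bd :: "nat \<Rightarrow> 'c \<Rightarrow> 'c \<Rightarrow> rat"
    and v e :: "nat \<Rightarrow> 'c" and or :: "nat \<Rightarrow> rat"
  assumes n3: "3 \<le> n"
    and v_inj: "inj_on v {..<n}" and c0: "cells 0 = v ` {..<n}"
    and e_inj: "inj_on e {..<n}" and c1: "cells 1 = e ` {..<n}"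
    and or1: "\<And>i. i < n \<Longrightarrow> or i = 1 \<or> or i = -1"
    and bd1: "\<And>i k. i < n \<Longrightarrow> k < n \<Longrightarrow> bd 1 (e i) (v k) =
        or i * ((if k = Suc i mod n then 1 else 0) - (if k = i then 1 else 0))"
begin

lemma n0: "0 < n" using n3 by simp

lemma sum_c0: "(\<Sum>s\<in>cells 0. F s) = (\<Sum>k<n. F (v k))"
  unfolding c0 by (simp add: sum.reindex[OF v_inj])
lemma sum_c1: "(\<Sum>s\<in>cells 1. F s) = (\<Sum>k<n. F (e k))"
  unfolding c1 by (simp add: sum.reindex[OF e_inj])

lemma sum_c1': "(\<Sum>s\<in>cells (Suc 0). F s) = (\<Sum>k<n. F (e k))"
  using sum_c1 by simp
lemma bd1': "i < n \<Longrightarrow> k < n \<Longrightarrow> bd (Suc 0) (e i) (v k) =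
        or i * ((if k = Suc i mod n then 1 else 0) - (if k = i then 1 else 0))"
  using bd1 by simp
lemma c1': "cells (Suc 0) = e ` {..<n}" using c1 by simp

lemma or_sq: "i < n \<Longrightarrow> or i * or i = 1"
  using or1[of i] by auto

lemma v_eq: "i < n \<Longrightarrow> j < n \<Longrightarrow> v i = v j \<longleftrightarrow> i = j"
  using v_inj by (auto dest: inj_onD)
lemma e_eq: "i < n \<Longrightarrow> j < n \<Longrightarrow> e i = e j \<longleftrightarrow> i = j"
  using e_inj by (auto dest: inj_onD)

lemma v_in: "k < n \<Longrightarrow> v k \<in> cells 0" using c0 by auto
lemma e_in: "k < n \<Longrightarrow> e k \<in> cells 1" using c1 by auto

definition z :: "'c \<Rightarrow> rat" where "z = (\<lambda>t. \<Sum>i<n. if t = e i then or i else 0)"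

lemma z_e: "j < n \<Longrightarrow> z (e j) = or j"
proof -
  assume j: "j < n"
  have "z (e j) = (\<Sum>i<n. if i = j then or i else 0)"
    unfolding z_def using e_eq[OF j] by (intro sum.cong) auto
  then show ?thesis using j by simp
qed

lemma z_out: "t \<notin> cells 1 \<Longrightarrow> z t = 0"
  unfolding z_def c1 by (auto intro!: sum.neutral)

lemma z_chain: "z \<in> chains cells 1"
  using z_out by (auto simp: chains_def)

lemma dmap1_v:
  assumes k: "k < n"
  shows "dmap cells bd 1 w (v k) = w (e ((k + n - 1) mod n)) * or ((k + n - 1) mod n) - w (e k) * or k"
proof -
  have "dmap cells bd 1 w (v k) = (\<Sum>i<n. w (e i) * bd 1 (e i) (v k))"
    unfolding dmap_def using v_in[OF k] by (simp add: sum_c1')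
  also have "\<dots> = (\<Sum>i<n. (if k = Suc i mod n then w (e i) * or i else 0) - (if k = i then w (e i) * or i else 0))"
    using bd1 k by (intro sum.cong) auto
  also have "\<dots> = w (e ((k + n - 1) mod n)) * or ((k + n - 1) mod n) - w (e k) * or k"
    using k by (simp add: sum_subtractf sum_delta_nx[OF k])
  finally show ?thesis .
qed

lemma dmap1_out: "t \<notin> cells 0 \<Longrightarrow> dmap cells bd 1 w t = 0"
  by (simp add: dmap_def)

lemma cycles1: "cycles cells bd 1 = range (\<lambda>a t. a * z t)"
proof
  show "cycles cells bd 1 \<subseteq> range (\<lambda>a t. a * z t)"
  proof
    fix w assume w: "w \<in> cycles cells bd 1"
    define W where "W = (\<lambda>i. w (e i) * or i)"
    have sh: "W ((k + n - 1) mod n) = W k" if "k < n" for k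
      using w dmap1_v[OF that, of w] unfolding cycles_def W_def by (auto dest: fun_cong[where x="v k"])
    have c: "W k = W 0" if "k < n" for k
      using that
    proof (induction k)
      case 0 then show ?case by simp
    next
      case (Suc k)
      have "(Suc k + n - 1) mod n = k" using Suc.prems by simp
      then show ?case using sh[OF Suc.prems] Suc by simp
    qed
    have "w = (\<lambda>t. W 0 * z t)"
    proof
      fix t
      show "w t = W 0 * z t"
      proof (cases "t \<in> cells 1")
        case True
        then obtain i where i: "i < n" "t = e i" using c1 by auto
        have "w t = W i * or i" using i or_sq[OF i(1)] by (simp add: W_def mult.assoc)
        then show ?thesis using c[OF i(1)] z_e[OF i(1)] i by simp
      next
        case False
        then show ?thesis using w z_out by (auto simp: cycles_def chains_def)
      qed
    qed
    then show "w \<in> range (\<lambda>a t. a * z t)" by blast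
  qed
next
  show "range (\<lambda>a t. a * z t) \<subseteq> cycles cells bd 1"
  proof
    fix w assume "w \<in> range (\<lambda>a t. a * z t)"
    then obtain a where a: "w = (\<lambda>t. a * z t)" by auto
    have "w \<in> chains cells 1" using a z_chain by (simp add: chains_scale)
    moreover have "dmap cells bd 1 w = (\<lambda>_. 0)"
    proof
      fix t
      show "dmap cells bd 1 w t = 0"
      proof (cases "t \<in> cells 0")
        case True
        then obtain k where k: "k < n" "t = v k" using c0 by auto
        have p: "(k + n - 1) mod n < n" using n0 by simp
        show ?thesis using k dmap1_v[OF k(1)] z_e[OF k(1)] z_e[OF p] or_sq[OF k(1)] or_sq[OF p]
          by (simp add: a mult.assoc)
      next
        case False then show ?thesis by (simp add: dmap_def)
      qed
    qed
    ultimately show "w \<in> cycles cells bd 1" by (simp add: cycles_def)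
  qed
qed


lemma sum_pv: "(\<Sum>k<n. g ((k + n - 1) mod n)) = (\<Sum>k<n. g k)"
proof -
  have "(\<Sum>k<n. g ((k + n - 1) mod n)) = (\<Sum>k<n. g ((Suc k mod n + n - 1) mod n))"
    using sum_nx[of "\<lambda>k. g ((k + n - 1) mod n)" n] by (simp only:)
  also have "\<dots> = (\<Sum>k<n. g k)"
  proof (intro sum.cong refl)
    fix k assume "k \<in> {..<n}"
    then have "k < n" by simp
    then have "k = (Suc k mod n + n - 1) mod n" using nx_pv_iff[of k n "Suc k mod n"] n0 by simp
    then show "g ((Suc k mod n + n - 1) mod n) = g k" by simp
  qed
  finally show ?thesis .
qed

definition SZ :: "('c \<Rightarrow> rat) set" where
  "SZ = {c \<in> chains cells 0. (\<Sum>s\<in>cells 0. c s) = 0}"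

lemma dl_v: "i < n \<Longrightarrow> k < n \<Longrightarrow> dl (v i) (v k) = (if k = i then 1 else 0)"
  using v_eq by (auto simp: dl_def)
lemma dl_out0: "t \<notin> cells 0 \<Longrightarrow> i < n \<Longrightarrow> dl (v i) t = 0"
proof -
  assume "t \<notin> cells 0" "i < n"
  then have "t \<noteq> v i" using v_in[of i] by blast
  then show ?thesis by (simp add: dl_def)
qed

lemma B0_zero: "(\<lambda>_. 0) \<in> boundaries cells bd 0"
proof -
  have "(\<lambda>_. 0) = dmap cells bd (Suc 0) (\<lambda>_. 0)" by (rule dmap_zero[symmetric])
  moreover have "(\<lambda>_. 0) \<in> chains cells (Suc 0)" by (rule chains_zero)
  ultimately show ?thesis unfolding boundaries_def by (rule image_eqI)
qed

lemma B0_add: "u \<in> boundaries cells bd 0 \<Longrightarrow> w \<in> boundaries cells bd 0 \<Longrightarrow>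
   (\<lambda>x. u x + w x) \<in> boundaries cells bd 0"
proof -
  assume "u \<in> boundaries cells bd 0" "w \<in> boundaries cells bd 0"
  then obtain a b where ab: "a \<in> chains cells (Suc 0)" "b \<in> chains cells (Suc 0)"
    "u = dmap cells bd (Suc 0) a" "w = dmap cells bd (Suc 0) b" by (auto simp: boundaries_def)
  have "(\<lambda>x. u x + w x) = dmap cells bd (Suc 0) (\<lambda>x. a x + b x)" using ab by (simp add: dmap_add)
  moreover have "(\<lambda>x. a x + b x) \<in> chains cells (Suc 0)" using ab by (simp add: chains_add)
  ultimately show ?thesis unfolding boundaries_def by (rule image_eqI)
qed

lemma B0_scale: "u \<in> boundaries cells bd 0 \<Longrightarrow> (\<lambda>x. c * u x) \<in> boundaries cells bd 0"
proof -
  assume "u \<in> boundaries cells bd 0"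
  then obtain a where ab: "a \<in> chains cells (Suc 0)" "u = dmap cells bd (Suc 0) a"
    by (auto simp: boundaries_def)
  have "(\<lambda>x. c * u x) = dmap cells bd (Suc 0) (\<lambda>x. c * a x)" using ab by (simp add: dmap_scale)
  moreover have "(\<lambda>x. c * a x) \<in> chains cells (Suc 0)" using ab by (simp add: chains_scale)
  ultimately show ?thesis unfolding boundaries_def by (rule image_eqI)
qed

lemma B0_step:
  assumes k: "Suc k < n"
  shows "(\<lambda>t. dl (v (Suc k)) t - dl (v k) t) \<in> boundaries cells bd 0"
proof -
  have kn: "k < n" using k by simp
  let ?w = "\<lambda>t. or k * dl (e k) t"
  have wc: "?w \<in> chains cells (Suc 0)"
    using e_in[OF kn] by (auto simp: chains_def dl_def)
  have "dmap cells bd (Suc 0) ?w = (\<lambda>t. dl (v (Suc k)) t - dl (v k) t)"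
  proof
    fix t
    show "dmap cells bd (Suc 0) ?w t = dl (v (Suc k)) t - dl (v k) t"
    proof (cases "t \<in> cells 0")
      case True
      then obtain j where j: "j < n" "t = v j" using c0 by auto
      have "dmap cells bd (Suc 0) ?w t = (\<Sum>i<n. or k * dl (e k) (e i) * bd (Suc 0) (e i) (v j))"
        unfolding dmap_def using True j by (simp add: sum_c1')
      also have "\<dots> = (\<Sum>i<n. if i = k then or k * bd (Suc 0) (e k) (v j) else 0)"
        using e_eq kn by (intro sum.cong) (auto simp: dl_def)
      also have "\<dots> = or k * bd (Suc 0) (e k) (v j)" using kn by simp
      also have "\<dots> = (if j = Suc k then 1 else 0) - (if j = k then 1 else 0)"
        using bd1'[OF kn j(1)] or_sq[OF kn] k by (simp add: mult.assoc[symmetric])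
      also have "\<dots> = dl (v (Suc k)) t - dl (v k) t"
        using dl_v k kn j by simp
      finally show ?thesis .
    next
      case False
      then show ?thesis using dl_out0 k kn by (simp add: dmap_def)
    qed
  qed
  then show ?thesis unfolding boundaries_def using wc by (intro image_eqI) auto
qed

lemma B0_D: "k < n \<Longrightarrow> (\<lambda>t. dl (v k) t - dl (v 0) t) \<in> boundaries cells bd 0"
proof (induction k)
  case 0 then show ?case using B0_zero by simp
next
  case (Suc k)
  have "(\<lambda>t. (dl (v k) t - dl (v 0) t) + (dl (v (Suc k)) t - dl (v k) t)) \<in> boundaries cells bd 0"
    using B0_add[OF Suc.IH B0_step[OF Suc.prems]] Suc.prems by simp
  then show ?case by simp
qed

definition bs0 :: "('c \<Rightarrow> rat) list" where
  "bs0 = map (\<lambda>i t. dl (v (Suc i)) t - dl (v 0) t) [0..<n-1]"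

lemma len_bs0: "length bs0 = n - 1" by (simp add: bs0_def)

lemma lincomb_bs0: "lincomb bs0 a t = (\<Sum>i<n-1. a i * (dl (v (Suc i)) t - dl (v 0) t))"
  by (simp add: lincomb_def bs0_def)

lemma lb_v0: "lincomb bs0 a (v 0) = - (\<Sum>i<n-1. a i)"
proof -
  have "lincomb bs0 a (v 0) = (\<Sum>i<n-1. - a i)"
    unfolding lincomb_bs0 using n0 dl_v by (intro sum.cong) auto
  then show ?thesis by (simp add: sum_negf)
qed

lemma lb_vS: "k < n - 1 \<Longrightarrow> lincomb bs0 a (v (Suc k)) = a k"
proof -
  assume k: "k < n - 1"
  have "lincomb bs0 a (v (Suc k)) = (\<Sum>i<n-1. if i = k then a k else 0)"
    unfolding lincomb_bs0 using k dl_v by (intro sum.cong) auto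
  then show ?thesis using k by simp
qed

lemma lb_out: "t \<notin> cells 0 \<Longrightarrow> lincomb bs0 a t = 0"
  unfolding lincomb_bs0 using dl_out0 by (intro sum.neutral) auto

lemma sum_split0: "(\<Sum>k<n. f k) = f 0 + (\<Sum>k<n-1. f (Suc k))"
proof -
  have "n = Suc (n - 1)" using n0 by simp
  then have "(\<Sum>k<n. f k) = (\<Sum>k<Suc (n-1). f k)" by simp
  also have "\<dots> = f 0 + (\<Sum>k<n-1. f (Suc k))" by (rule sum.lessThan_Suc_shift)
  finally show ?thesis .
qed

lemma range_bs0: "range (lincomb bs0) = SZ"
proof
  show "range (lincomb bs0) \<subseteq> SZ"
  proof
    fix c assume "c \<in> range (lincomb bs0)"
    then obtain a where a: "c = lincomb bs0 a" by auto
    have "c \<in> chains cells 0" using a lb_out by (auto simp: chains_def)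
    moreover have "(\<Sum>s\<in>cells 0. c s) = 0"
      unfolding sum_c0 sum_split0[of "\<lambda>k. c (v k)"] using a lb_v0 lb_vS by simp
    ultimately show "c \<in> SZ" by (simp add: SZ_def)
  qed
next
  show "SZ \<subseteq> range (lincomb bs0)"
  proof
    fix c assume c: "c \<in> SZ"
    define a where "a = (\<lambda>i. c (v (Suc i)))"
    have "c = lincomb bs0 a"
    proof
      fix t
      show "c t = lincomb bs0 a t"
      proof (cases "t \<in> cells 0")
        case True
        then obtain k where k: "k < n" "t = v k" using c0 by auto
        show ?thesis
        proof (cases k)
          case 0
          have "(\<Sum>s\<in>cells 0. c s) = 0" using c by (simp add: SZ_def)
          then have "c (v 0) + (\<Sum>k<n-1. c (v (Suc k))) = 0"
            unfolding sum_c0 sum_split0[of "\<lambda>k. c (v k)"] .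
          then have "c (v 0) = - (\<Sum>k<n-1. c (v (Suc k)))" by (simp add: eq_neg_iff_add_eq_0)
          also have "\<dots> = lincomb bs0 a (v 0)" using lb_v0[of a] by (simp add: a_def)
          finally show ?thesis using k 0 by simp
        next
          case (Suc k')
          then show ?thesis using k lb_vS[of k' a] by (simp add: a_def)
        qed
      next
        case False
        then show ?thesis using c lb_out by (auto simp: SZ_def chains_def)
      qed
    qed
    then show "c \<in> range (lincomb bs0)" by blast
  qed
qed

lemma B0_eq: "boundaries cells bd 0 = SZ"
proof
  show "boundaries cells bd 0 \<subseteq> SZ"
  proof
    fix c assume "c \<in> boundaries cells bd 0"
    then obtain w where w: "w \<in> chains cells (Suc 0)" "c = dmap cells bd (Suc 0) w"
      by (auto simp: boundaries_def)
    have "c \<in> chains cells 0" using w by (auto simp: chains_def dmap_def)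
    moreover have "(\<Sum>s\<in>cells 0. c s) = 0"
    proof -
      have "(\<Sum>s\<in>cells 0. c s) = (\<Sum>k<n. w (e ((k + n - 1) mod n)) * or ((k + n - 1) mod n) - w (e k) * or k)"
        unfolding sum_c0 using dmap1_v w(2) by (intro sum.cong) auto
      also have "\<dots> = 0"
        using sum_pv[of "\<lambda>i. w (e i) * or i"] by (simp add: sum_subtractf)
      finally show ?thesis .
    qed
    ultimately show "c \<in> SZ" by (simp add: SZ_def)
  qed
next
  show "SZ \<subseteq> boundaries cells bd 0"
    unfolding range_bs0[symmetric]
  proof
    fix c assume "c \<in> range (lincomb bs0)"
    then obtain a where a: "c = lincomb bs0 a" by auto
    show "c \<in> boundaries cells bd 0" unfolding a
      by (rule lincomb_sub_range) (auto simp: bs0_def intro: B0_D B0_zero B0_add B0_scale)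
  qed
qed

lemma cycles0: "cycles cells bd 0 = chains cells 0"
  by (auto simp: cycles_def dmap_def)

lemma lfun0: "lfun (cells 0) (\<lambda>_. 1) w = (\<Sum>s\<in>cells 0. w s)"
  by (simp add: lfun_def)

lemma tr0:
  assumes phi: "\<And>k. k < n \<Longrightarrow> \<phi> k < n"
    and fc0: "\<And>k k'. k < n \<Longrightarrow> k' < n \<Longrightarrow> fc 0 (v k) (v k') = (if k' = \<phi> k then 1 else 0)"
  shows "quot_trace (cycles cells bd 0) (boundaries cells bd 0) (fmap cells fc 0) = 1"
proof -
  let ?z = "dl (v 0)"
  have z0c: "?z \<in> chains cells 0" using v_in[OF n0] by (auto simp: chains_def dl_def)
  have sz: "(\<Sum>s\<in>cells 0. ?z s) = 1"
    unfolding sum_c0 using dl_v n0 by (simp add: sum.delta)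
  have ind: "lin_indep (bs0 @ [?z])"
    unfolding lin_indep_def
  proof (rule allI, rule impI)
    fix a assume a: "lincomb (bs0 @ [?z]) a = (\<lambda>_. 0)"
    have e: "lincomb (bs0 @ [?z]) a = (\<lambda>x. lincomb bs0 a x + a (n - 1) * ?z x)"
      by (simp add: lincomb_append lincomb_single len_bs0)
    have "lincomb bs0 a \<in> SZ" using range_bs0 by auto
    then have s0: "(\<Sum>s\<in>cells 0. lincomb bs0 a s) = 0" by (simp add: SZ_def)
    have "(\<Sum>s\<in>cells 0. lincomb (bs0 @ [?z]) a s) = 0" using a by simp
    then have an: "a (n - 1) = 0"
      unfolding e sum.distrib s0 sum_distrib_left[symmetric] sz by simp
    then have lb: "lincomb bs0 a = (\<lambda>_. 0)" using a e by (auto dest: fun_cong)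
    show "\<forall>i<length (bs0 @ [?z]). a i = 0"
    proof (intro allI impI)
      fix i assume "i < length (bs0 @ [?z])"
      then have "i < n" using len_bs0 n0 by simp
      show "a i = 0"
      proof (cases "i = n - 1")
        case True then show ?thesis using an by simp
      next
        case False
        then have "i < n - 1" using \<open>i < n\<close> by simp
        then show ?thesis using lb_vS[of i a] lb by simp
      qed
    qed
  qed
  have rng: "range (lincomb (bs0 @ [?z])) = chains cells 0"
  proof
    show "range (lincomb (bs0 @ [?z])) \<subseteq> chains cells 0"
    proof
      fix c assume "c \<in> range (lincomb (bs0 @ [?z]))"
      then obtain a where a: "c = lincomb (bs0 @ [?z]) a" by auto
      have "\<And>i. i < length (bs0 @ [?z]) \<Longrightarrow> (bs0 @ [?z]) ! i \<in> chains cells 0"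
      proof -
        fix i assume "i < length (bs0 @ [?z])"
        then show "(bs0 @ [?z]) ! i \<in> chains cells 0"
          using z0c dl_out0 by (auto simp: nth_append bs0_def chains_def len_bs0)
      qed
      then show "c \<in> chains cells 0" unfolding a
        by (rule lincomb_sub_range) (auto intro: chains_zero chains_add chains_scale)
    qed
  next
    show "chains cells 0 \<subseteq> range (lincomb (bs0 @ [?z]))"
    proof
      fix c assume c: "c \<in> chains cells 0"
      define s where "s = (\<Sum>x\<in>cells 0. c x)"
      have "(\<lambda>x. c x + (- s) * ?z x) \<in> chains cells 0"
        using c z0c by (intro chains_add chains_scale)
      moreover have "(\<Sum>x\<in>cells 0. c x + (- s) * ?z x) = 0"
        unfolding sum.distrib sum_distrib_left[symmetric] sz s_def by simp
      ultimately have "(\<lambda>x. c x + (- s) * ?z x) \<in> SZ" by (simp add: SZ_def)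
      then obtain a where a: "(\<lambda>x. c x + (- s) * ?z x) = lincomb bs0 a" using range_bs0 by auto
      have l1: "lincomb bs0 (a(n - 1 := s)) = lincomb bs0 a"
        by (rule lincomb_cong) (simp add: len_bs0)
      have "lincomb (bs0 @ [?z]) (a(n - 1 := s)) = (\<lambda>x. lincomb bs0 (a(n - 1 := s)) x + s * ?z x)"
        by (simp add: lincomb_append lincomb_single len_bs0)
      also have "\<dots> = (\<lambda>x. lincomb bs0 a x + s * ?z x)" unfolding l1 ..
      also have "\<dots> = c"
      proof
        fix x
        show "lincomb bs0 a x + s * ?z x = c x" using fun_cong[OF a, of x] by simp
      qed
      finally have "lincomb (bs0 @ [?z]) (a(n - 1 := s)) = c" .
      then show "c \<in> range (lincomb (bs0 @ [?z]))" by blast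
    qed
  qed
  have fz: "fmap cells fc 0 ?z \<in> chains cells 0" by (auto simp: fmap_def chains_def)
  then obtain a0 where a0: "fmap cells fc 0 ?z = lincomb (bs0 @ [?z]) a0" using rng by auto
  show ?thesis
  proof (rule quot_trace_one[of bs0 ?z _ _ "fmap cells fc 0" a0 "cells 0" "\<lambda>_. 1"])
    show "lin_indep (bs0 @ [?z])" by (rule ind)
    show "range (lincomb bs0) = boundaries cells bd 0" using range_bs0 B0_eq by simp
    show "range (lincomb (bs0 @ [?z])) = cycles cells bd 0" using rng cycles0 by simp
    show "fmap cells fc 0 ?z = lincomb (bs0 @ [?z]) a0" by (rule a0)
    show "lfun (cells 0) (\<lambda>_. 1) w = 0 \<longleftrightarrow> w \<in> boundaries cells bd 0" if "w \<in> cycles cells bd 0" for w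
      using that by (simp add: lfun0 B0_eq SZ_def cycles0)
    show "\<exists>w\<in>cycles cells bd 0. lfun (cells 0) (\<lambda>_. 1) w \<noteq> 0"
      unfolding lfun0 cycles0 using z0c sz by (intro bexI[of _ ?z]) auto
    show "lfun (cells 0) (\<lambda>_. 1) (fmap cells fc 0 w) = 1 * lfun (cells 0) (\<lambda>_. 1) w"
      if "w \<in> cycles cells bd 0" for w
    proof -
      have "lfun (cells 0) (\<lambda>_. 1) (fmap cells fc 0 w) = (\<Sum>t\<in>cells 0. \<Sum>s\<in>cells 0. w s * fc 0 s t)"
        by (simp add: lfun0 fmap_def)
      also have "\<dots> = (\<Sum>s\<in>cells 0. \<Sum>t\<in>cells 0. w s * fc 0 s t)" by (rule sum.swap)
      also have "\<dots> = (\<Sum>s\<in>cells 0. w s)"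
        unfolding sum_c0
      proof (intro sum.cong refl)
        fix k assume k: "k \<in> {..<n}"
        have "(\<Sum>k'<n. w (v k) * fc 0 (v k) (v k')) = (\<Sum>k'<n. if k' = \<phi> k then w (v k) else 0)"
          using fc0 k by (intro sum.cong) auto
        also have "\<dots> = w (v k)" using phi k by simp
        finally show "(\<Sum>k'<n. w (v k) * fc 0 (v k) (v k')) = w (v k)" .
      qed
      finally show ?thesis by (simp add: lfun0)
    qed
  qed
qed

end


context cyc begin

lemma dmap1_v_raw:
  assumes k: "k < n"
  shows "dmap cells bd (Suc 0) w (v k) = (\<Sum>i<n. w (e i) * bd (Suc 0) (e i) (v k))"
  unfolding dmap_def using v_in[OF k] by (simp add: sum_c1')

lemma range_single_z: "range (lincomb [z]) = range (\<lambda>a t. a * z t)"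
proof
  show "range (lincomb [z]) \<subseteq> range (\<lambda>a t. a * z t)" by (auto simp: lincomb_single)
  show "range (\<lambda>a t. a * z t) \<subseteq> range (lincomb [z])"
  proof
    fix w assume "w \<in> range (\<lambda>a t. a * z t)"
    then obtain a where "w = (\<lambda>t. a * z t)" by auto
    then have "w = lincomb [z] (\<lambda>_. a)" by (simp add: lincomb_single)
    then show "w \<in> range (lincomb [z])" by blast
  qed
qed

lemma z_nz: "lfun {e 0} (\<lambda>_. or 0) z = 1"
  using z_e[OF n0] or_sq[OF n0] by (simp add: lfun_def)

lemma lfun_az: "lfun {e 0} (\<lambda>_. or 0) (\<lambda>t. a * z t) = a"
  using z_e[OF n0] or_sq[OF n0] by (simp add: lfun_def)

lemma indep_z: "lin_indep ([] @ [z])"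
  unfolding lin_indep_def
proof (rule allI, rule impI)
  fix a assume "lincomb ([] @ [z]) a = (\<lambda>_. 0)"
  then have "(\<lambda>t. a 0 * z t) = (\<lambda>_. 0)" by (simp add: lincomb_single)
  then have "lfun {e 0} (\<lambda>_. or 0) (\<lambda>t. a 0 * z t) = 0" by (simp add: lfun_def)
  then have "a 0 = 0" using lfun_az by simp
  then show "\<forall>i<length ([] @ [z]). a i = 0" by simp
qed

lemma hollow:
  assumes phi: "ccont n \<phi>"
    and fc0: "\<And>k k'. k < n \<Longrightarrow> k' < n \<Longrightarrow> fc 0 (v k) (v k') = (if k' = \<phi> k then 1 else 0)"
    and fc1: "\<And>i j. i < n \<Longrightarrow> j < n \<Longrightarrow> fc 1 (e i) (e j) = or i * or j * of_int (Fw n \<phi> i j)"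
    and emp: "\<And>q. 2 \<le> q \<Longrightarrow> cells q = {}"
    and N: "1 \<le> N"
  shows "lefschetz cells bd fc N = 1 - of_int (deg n \<phi>)"
proof -
  have phin: "\<And>k. k < n \<Longrightarrow> \<phi> k < n" using phi by (simp add: ccont_def)
  let ?d = "of_int (deg n \<phi>) :: rat"
  have Pz: "fmap cells fc 1 z = (\<lambda>t. ?d * z t)"
  proof
    fix t
    show "fmap cells fc 1 z t = ?d * z t"
    proof (cases "t \<in> cells 1")
      case True
      then obtain j where j: "j < n" "t = e j" using c1 by auto
      have "fmap cells fc 1 z t = (\<Sum>i<n. z (e i) * fc 1 (e i) (e j))"
        unfolding fmap_def using True j by (simp add: sum_c1')
      also have "\<dots> = (\<Sum>i<n. or j * of_int (Fw n \<phi> i j))"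
        using fc1 j z_e or_sq by (intro sum.cong) (auto simp: mult.assoc[symmetric])
      also have "\<dots> = or j * of_int (Nf n \<phi> j)" by (simp add: Nf_def sum_distrib_left)
      also have "\<dots> = ?d * z t" using Nf_const[OF n3 phi j(1)] z_e j by simp
      finally show ?thesis .
    next
      case False then show ?thesis using z_out by (simp add: fmap_def)
    qed
  qed
  have B1: "boundaries cells bd 1 = {\<lambda>_. 0}"
    using emp[of 2] by (auto simp: boundaries_def chains_empty dmap_zero numeral_2_eq_2)
  have tr1: "quot_trace (cycles cells bd 1) (boundaries cells bd 1) (fmap cells fc 1) = ?d"
  proof (rule quot_trace_one[of "[]" z _ _ _ "\<lambda>_. ?d" "{e 0}" "\<lambda>_. or 0"])
    show "lin_indep ([] @ [z])" by (rule indep_z)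
    show "range (lincomb []) = boundaries cells bd 1" using B1 by (simp add: lincomb_Nil)
    show "range (lincomb ([] @ [z])) = cycles cells bd 1" using range_single_z cycles1 by simp
    show "fmap cells fc 1 z = lincomb ([] @ [z]) (\<lambda>_. ?d)" using Pz by (simp add: lincomb_single)
    show "lfun {e 0} (\<lambda>_. or 0) w = 0 \<longleftrightarrow> w \<in> boundaries cells bd 1" if "w \<in> cycles cells bd 1" for w
    proof -
      have "w \<in> range (\<lambda>a t. a * z t)" using that cycles1 by simp
      then obtain a where a: "w = (\<lambda>t. a * z t)" by auto
      have "w = (\<lambda>_. 0) \<longleftrightarrow> a = 0"
      proof
        assume "w = (\<lambda>_. 0)"
        then have "lfun {e 0} (\<lambda>_. or 0) w = 0" by (simp add: lfun_def)
        then show "a = 0" using lfun_az a by simp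
      qed (simp add: a)
      then show ?thesis using lfun_az a B1 by auto
    qed
    show "\<exists>w\<in>cycles cells bd 1. lfun {e 0} (\<lambda>_. or 0) w \<noteq> 0"
      using z_nz cycles1 by (intro bexI[of _ z]) (auto intro: range_eqI[of _ _ 1])
    show "lfun {e 0} (\<lambda>_. or 0) (fmap cells fc 1 w) = ?d * lfun {e 0} (\<lambda>_. or 0) w"
      if "w \<in> cycles cells bd 1" for w
    proof -
      have "w \<in> range (\<lambda>a t. a * z t)" using that cycles1 by simp
      then obtain a where a: "w = (\<lambda>t. a * z t)" by auto
      have "fmap cells fc 1 w = (\<lambda>t. (a * ?d) * z t)" unfolding a fmap_scale Pz by (simp add: mult.assoc)
      then show ?thesis unfolding a lfun_az using lfun_az[of "a * ?d"] by simp
    qed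
  qed
  have trq: "quot_trace (cycles cells bd q) (boundaries cells bd q) (fmap cells fc q) = 0" if "2 \<le> q" for q
    using emp that by (intro trace_empty) auto
  have "lefschetz cells bd fc N =
    (-1) ^ 0 * quot_trace (cycles cells bd 0) (boundaries cells bd 0) (fmap cells fc 0) +
    (-1) ^ 1 * quot_trace (cycles cells bd 1) (boundaries cells bd 1) (fmap cells fc 1)"
    unfolding lefschetz_def by (rule sum_first_two[OF _ N]) (simp add: trq)
  also have "\<dots> = 1 - ?d" using tr0[of \<phi> fc, OF phin fc0] tr1 by simp
  finally show ?thesis .
qed

lemma filled:
  assumes phin: "\<And>k. k < n \<Longrightarrow> \<phi> k < n"
    and fc0: "\<And>k k'. k < n \<Longrightarrow> k' < n \<Longrightarrow> fc 0 (v k) (v k') = (if k' = \<phi> k then 1 else 0)"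
    and T: "cells 2 = {T}"
    and emp: "\<And>q. 3 \<le> q \<Longrightarrow> cells q = {}"
    and dd: "\<And>k. k < n \<Longrightarrow> (\<Sum>i<n. bd 2 T (e i) * bd 1 (e i) (v k)) = 0"
    and nz: "\<exists>i<n. bd 2 T (e i) \<noteq> 0"
    and N: "2 \<le> N"
  shows "lefschetz cells bd fc N = 1"
proof -
  define W where "W = (\<lambda>t. if t \<in> cells 1 then bd 2 T t else 0)"
  have T2: "cells (Suc (Suc 0)) = {T}" using T by (simp add: numeral_2_eq_2)
  have dW: "dmap cells bd 2 (\<lambda>t. a * dl T t) = (\<lambda>t. a * W t)" for a
    by (auto simp: dmap_def W_def T dl_def)
  have Wc: "W \<in> cycles cells bd 1"
  proof -
    have "W \<in> chains cells 1" by (simp add: W_def chains_def)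
    moreover have "dmap cells bd 1 W = (\<lambda>_. 0)"
    proof
      fix t
      show "dmap cells bd 1 W t = 0"
      proof (cases "t \<in> cells 0")
        case True
        then obtain k where k: "k < n" "t = v k" using c0 by auto
        have "dmap cells bd 1 W t = (\<Sum>i<n. W (e i) * bd (Suc 0) (e i) (v k))"
          using dmap1_v_raw[OF k(1)] k by simp
        also have "\<dots> = (\<Sum>i<n. bd 2 T (e i) * bd 1 (e i) (v k))"
          using e_in by (intro sum.cong) (auto simp: W_def)
        also have "\<dots> = 0" by (rule dd[OF k(1)])
        finally show ?thesis .
      next
        case False then show ?thesis by (simp add: dmap_def)
      qed
    qed
    ultimately show ?thesis by (simp add: cycles_def)
  qed
  then obtain eps where eps: "W = (\<lambda>t. eps * z t)" using cycles1 by auto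
  obtain i0 where i0: "i0 < n" "bd 2 T (e i0) \<noteq> 0" using nz by auto
  have epsnz: "eps \<noteq> 0"
  proof
    assume "eps = 0"
    then have "W (e i0) = 0" using eps by simp
    then show False using i0 e_in[OF i0(1)] by (simp add: W_def)
  qed
  have ch2: "chains cells 2 = range (\<lambda>a t. a * dl T t)"
  proof
    show "chains cells 2 \<subseteq> range (\<lambda>a t. a * dl T t)"
    proof
      fix c assume "c \<in> chains cells 2"
      then have "c = (\<lambda>t. c T * dl T t)" by (auto simp: chains_def T dl_def)
      then show "c \<in> range (\<lambda>a t. a * dl T t)" by blast
    qed
    show "range (\<lambda>a t. a * dl T t) \<subseteq> chains cells 2" by (auto simp: chains_def T dl_def)
  qed
  have B1: "boundaries cells bd 1 = cycles cells bd 1"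
  proof
    show "boundaries cells bd 1 \<subseteq> cycles cells bd 1"
    proof
      fix c assume "c \<in> boundaries cells bd 1"
      then obtain a where "c = dmap cells bd 2 (\<lambda>t. a * dl T t)"
        using ch2 by (auto simp: boundaries_def numeral_2_eq_2)
      then have "c = (\<lambda>t. (a * eps) * z t)" using dW eps by (simp add: mult.assoc)
      then show "c \<in> cycles cells bd 1" using cycles1 by auto
    qed
    show "cycles cells bd 1 \<subseteq> boundaries cells bd 1"
    proof
      fix c assume "c \<in> cycles cells bd 1"
      then obtain a where a: "c = (\<lambda>t. a * z t)" using cycles1 by auto
      have "c = dmap cells bd 2 (\<lambda>t. (a / eps) * dl T t)"
        unfolding dW eps a using epsnz by auto
      moreover have "(\<lambda>t. (a / eps) * dl T t) \<in> chains cells 2" unfolding ch2 by (rule rangeI)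
      ultimately show "c \<in> boundaries cells bd 1"
        unfolding boundaries_def by (simp add: numeral_2_eq_2)
    qed
  qed
  have tr1: "quot_trace (cycles cells bd 1) (boundaries cells bd 1) (fmap cells fc 1) = 0"
  proof (rule quot_trace_zero[of "[z]"])
    show "lin_indep [z]" using indep_z by simp
    show "range (lincomb [z]) = boundaries cells bd 1" using B1 cycles1 range_single_z by simp
    show "cycles cells bd 1 = boundaries cells bd 1" using B1 by simp
  qed
  have C2: "cycles cells bd 2 = {\<lambda>_. 0}"
  proof
    show "cycles cells bd 2 \<subseteq> {\<lambda>_. 0}"
    proof
      fix c assume c: "c \<in> cycles cells bd 2"
      then obtain a where a: "c = (\<lambda>t. a * dl T t)" using ch2 by (auto simp: cycles_def)
      have "(\<lambda>t. a * W t) = (\<lambda>_. 0)" using c dW a by (simp add: cycles_def)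
      then have "a * W (e i0) = 0" by (auto dest: fun_cong)
      then have "a = 0" using i0 e_in[OF i0(1)] by (simp add: W_def)
      then show "c \<in> {\<lambda>_. 0}" using a by simp
    qed
    show "{\<lambda>_. 0} \<subseteq> cycles cells bd 2" by (auto simp: cycles_def chains_zero dmap_zero)
  qed
  have B2: "boundaries cells bd 2 = {\<lambda>_. 0}"
    using emp[of 3] by (auto simp: boundaries_def chains_empty dmap_zero numeral_3_eq_3)
  have tr2: "quot_trace (cycles cells bd 2) (boundaries cells bd 2) (fmap cells fc 2) = 0"
    by (rule quot_trace_zero[of "[]"]) (auto simp: lin_indep_def lincomb_Nil C2 B2)
  have trq: "quot_trace (cycles cells bd q) (boundaries cells bd q) (fmap cells fc q) = 0" if "3 \<le> q" for q
    using emp that by (intro trace_empty) auto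
  have "lefschetz cells bd fc N =
    (-1) ^ 0 * quot_trace (cycles cells bd 0) (boundaries cells bd 0) (fmap cells fc 0) +
    (-1) ^ 1 * quot_trace (cycles cells bd 1) (boundaries cells bd 1) (fmap cells fc 1) +
    (-1) ^ 2 * quot_trace (cycles cells bd 2) (boundaries cells bd 2) (fmap cells fc 2)"
    unfolding lefschetz_def by (rule sum_first_three[OF _ N]) (simp add: trq)
  also have "\<dots> = 1" using tr0[of \<phi> fc, OF phin fc0] tr1 tr2 by simp
  finally show ?thesis .
qed

end


lemma dc_adj: "digital_cycle X adj n x \<Longrightarrow> i < n \<Longrightarrow> j < n \<Longrightarrow>
   adj (x i) (x j) \<longleftrightarrow> (j = Suc i mod n \<or> i = Suc j mod n)"
  by (simp add: digital_cycle_def)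

lemma dc_inj: "digital_cycle X adj n x \<Longrightarrow> inj_on x {..<n}"
  by (simp add: digital_cycle_def)

lemma dc_X: "digital_cycle X adj n x \<Longrightarrow> X = x ` {..<n}"
  by (simp add: digital_cycle_def)

lemma x_eq: "inj_on x {..<n} \<Longrightarrow> p < n \<Longrightarrow> q < n \<Longrightarrow> x p = x q \<longleftrightarrow> p = q"
  by (auto dest: inj_onD)

lemma A_iff: "i < (n::nat) \<Longrightarrow> j < n \<Longrightarrow> (j = Suc i mod n \<or> i = Suc j mod n) \<longleftrightarrow>
   (j = Suc i \<or> i = Suc j \<or> (Suc i = n \<and> j = 0) \<or> (Suc j = n \<and> i = 0))"
  using nx_eq[of i n] nx_eq[of j n] by auto

lemma nx_ne: "2 \<le> n \<Longrightarrow> i < (n::nat) \<Longrightarrow> Suc i mod n \<noteq> i"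
  using nx_eq[of i n] by auto

lemma tri_idx:
  assumes "4 \<le> n" "a < n" "b < n" "c < (n::nat)" "a \<noteq> b" "b \<noteq> c" "a \<noteq> c"
    "b = Suc a mod n \<or> a = Suc b mod n" "c = Suc b mod n \<or> b = Suc c mod n" "c = Suc a mod n \<or> a = Suc c mod n"
  shows False
proof -
  have h1: "b = Suc a \<or> a = Suc b \<or> (Suc a = n \<and> b = 0) \<or> (Suc b = n \<and> a = 0)"
    using A_iff[of a n b] assms by blast
  have h2: "c = Suc b \<or> b = Suc c \<or> (Suc b = n \<and> c = 0) \<or> (Suc c = n \<and> b = 0)"
    using A_iff[of b n c] assms by blast
  have h3: "c = Suc a \<or> a = Suc c \<or> (Suc a = n \<and> c = 0) \<or> (Suc c = n \<and> a = 0)"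
    using A_iff[of a n c] assms by blast
  show False using h1 h2 h3 assms(1-7) by (elim disjE conjE; linarith)
qed

lemma c4_idx:
  assumes "3 \<le> n" "a < n" "b < n" "c < n" "d < (n::nat)" "a \<noteq> c" "b \<noteq> d"
    "b = Suc a mod n \<or> a = Suc b mod n" "c = Suc b mod n \<or> b = Suc c mod n"
    "d = Suc c mod n \<or> c = Suc d mod n" "a = Suc d mod n \<or> d = Suc a mod n"
  shows "n = 4"
proof -
  have h1: "b = Suc a \<or> a = Suc b \<or> (Suc a = n \<and> b = 0) \<or> (Suc b = n \<and> a = 0)"
    using A_iff[of a n b] assms by blast
  have h2: "c = Suc b \<or> b = Suc c \<or> (Suc b = n \<and> c = 0) \<or> (Suc c = n \<and> b = 0)"
    using A_iff[of b n c] assms by blast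
  have h3: "d = Suc c \<or> c = Suc d \<or> (Suc c = n \<and> d = 0) \<or> (Suc d = n \<and> c = 0)"
    using A_iff[of c n d] assms by blast
  have h4: "a = Suc d \<or> d = Suc a \<or> (Suc d = n \<and> a = 0) \<or> (Suc a = n \<and> d = 0)"
    using A_iff[of d n a] assms by blast
  show ?thesis using h1 h2 h3 h4 assms(1-7) by (elim disjE conjE; linarith)
qed

lemma pair_idx:
  assumes n3: "3 \<le> n" and inj: "inj_on x {..<n}" and i: "i < n" and j: "j < n"
    and eq: "{x i, x (Suc i mod n)} = {x j, x (Suc j mod n)}"
  shows "i = j"
proof -
  have n0: "0 < n" using n3 by simp
  have l: "Suc i mod n < n" "Suc j mod n < n" using n0 by auto
  from eq have "(x i = x j \<and> x (Suc i mod n) = x (Suc j mod n)) \<or> (x i = x (Suc j mod n) \<and> x (Suc i mod n) = x j)"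
    by (simp add: doubleton_eq_iff)
  then have "i = j \<or> (i = Suc j mod n \<and> Suc i mod n = j)"
    using x_eq[OF inj] i j l by auto
  then show ?thesis using nx2[OF n3 j] by auto
qed

definition phi_of :: "nat \<Rightarrow> (nat \<Rightarrow> 'a) \<Rightarrow> ('a \<Rightarrow> 'a) \<Rightarrow> nat \<Rightarrow> nat" where
  "phi_of n x f k = (SOME k'. k' < n \<and> f (x k) = x k')"

lemma phi_of:
  assumes dc: "digital_cycle X adj n x" and fX: "f ` X \<subseteq> X" and k: "k < n"
  shows "phi_of n x f k < n \<and> f (x k) = x (phi_of n x f k)"
proof -
  have "f (x k) \<in> X" using fX dc_X[OF dc] k by auto
  then obtain k' where "k' < n" "f (x k) = x k'" using dc_X[OF dc] by auto
  then have "\<exists>k'. k' < n \<and> f (x k) = x k'" by blast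
  then show ?thesis unfolding phi_of_def by (rule someI_ex)
qed

lemma ccont_phi:
  assumes n3: "3 \<le> n" and dc: "digital_cycle X adj n x" and fc: "digital_continuous X adj f"
  shows "ccont n (phi_of n x f)"
proof -
  let ?p = "phi_of n x f"
  have fX: "f ` X \<subseteq> X" using fc by (simp add: digital_continuous_def)
  have inj: "inj_on x {..<n}" using dc_inj[OF dc] .
  have n0: "0 < n" using n3 by simp
  have P: "\<And>k. k < n \<Longrightarrow> ?p k < n \<and> f (x k) = x (?p k)" using phi_of[OF dc fX] by blast
  show ?thesis unfolding ccont_def
  proof (intro conjI allI impI)
    fix k assume "k < n" then show "?p k < n" using P by blast
  next
    fix i assume i: "i < n"
    let ?j = "Suc i mod n"
    have j: "?j < n" using n0 by simp
    have a: "adj (x i) (x ?j)" using dc_adj[OF dc i j] by simp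
    have "x i \<in> X" "x ?j \<in> X" using dc_X[OF dc] i j by auto
    then have "f (x i) = f (x ?j) \<or> adj (f (x i)) (f (x ?j))"
      using fc a unfolding digital_continuous_def by blast
    then have "x (?p i) = x (?p ?j) \<or> adj (x (?p i)) (x (?p ?j))" using P i j by simp
    then show "?p ?j = ?p i \<or> ?p ?j = Suc (?p i) mod n \<or> ?p i = Suc (?p ?j) mod n"
      using x_eq[OF inj] dc_adj[OF dc] P i j by (metis)
  qed
qed

lemma fcform:
  assumes n3: "3 \<le> n" and inj: "inj_on x {..<n}" and c: "ccont n \<phi>"
    and fx: "\<And>k. k < n \<Longrightarrow> f (x k) = x (\<phi> k)" and i: "i < n" and j: "j < n"
    and oi: "oi = 1 \<or> oi = -1" and oj: "oj = 1 \<or> oj = -1"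
  shows "(if {f (if oi = 1 then x i else x (Suc i mod n)), f (if oi = 1 then x (Suc i mod n) else x i)}
            = {if oj = 1 then x j else x (Suc j mod n), if oj = 1 then x (Suc j mod n) else x j}
          then (if f (if oi = 1 then x i else x (Suc i mod n)) = (if oj = 1 then x j else x (Suc j mod n))
                then 1 else -1) else (0::rat)) = oi * oj * of_int (Fw n \<phi> i j)"
proof -
  have n0: "0 < n" using n3 by simp
  define i' where "i' = Suc i mod n"
  define j' where "j' = Suc j mod n"
  define p where "p = \<phi> i"
  define q where "q = \<phi> i'"
  have l: "i' < n" "j' < n" "p < n" "q < n"
    using n0 c i unfolding i'_def j'_def p_def q_def ccont_def by auto
  have fi: "f (x i) = x p" "f (x i') = x q" using fx i l unfolding p_def q_def by auto
  have pn: "Suc p mod n < n" using n0 by simp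
  have qn: "Suc q mod n < n" using n0 by simp
  have jj: "j' \<noteq> j" "Suc j' mod n \<noteq> j" using nx_ne[of n j] nx2[OF n3 j] n3 j unfolding j'_def by auto
  have cc: "q = p \<or> q = Suc p mod n \<or> p = Suc q mod n"
    using c i unfolding ccont_def p_def q_def i'_def by auto
  have pp: "Suc p mod n \<noteq> p" "Suc (Suc p mod n) mod n \<noteq> p" "Suc q mod n \<noteq> q" "Suc (Suc q mod n) mod n \<noteq> q"
    using nx_ne[of n p] nx_ne[of n q] nx2[OF n3, of p] nx2[OF n3, of q] n3 l by auto
  have xe: "\<And>a b. a < n \<Longrightarrow> b < n \<Longrightarrow> x a = x b \<longleftrightarrow> a = b" using x_eq[OF inj] by blast
  have Fw': "Fw n \<phi> i j = (if q = Suc p mod n \<and> j = p then 1 else if p = Suc q mod n \<and> j = q then -1 else 0)"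
    unfolding Fw_def p_def q_def i'_def by simp
  show ?thesis
    unfolding Fw' i'_def[symmetric] j'_def[symmetric]
    using oi oj cc fi l pn qn jj pp j
    by (auto simp: doubleton_eq_iff xe j'_def)
qed


lemma orient_props: "finite s \<Longrightarrow> distinct (orient s) \<and> set (orient s) = s"
  unfolding orient_def by (rule someI_ex) (metis finite_distinct_list)

lemma orient1: "orient {a} = [a]"
proof -
  have "distinct (orient {a}) \<and> set (orient {a}) = {a}" by (rule orient_props) simp
  then have len: "length (orient {a}) = 1" using distinct_card[of "orient {a}"] by simp
  then obtain y where "orient {a} = [y]" by (cases "orient {a}") auto
  then show ?thesis using \<open>distinct (orient {a}) \<and> set (orient {a}) = {a}\<close> by simp
qed

lemma orient2: "a \<noteq> b \<Longrightarrow> orient {a, b} = [a, b] \<or> orient {a, b} = [b, a]"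
proof -
  assume ab: "a \<noteq> b"
  have d: "distinct (orient {a, b}) \<and> set (orient {a, b}) = {a, b}" by (rule orient_props) simp
  then have "length (orient {a, b}) = 2" using ab distinct_card[of "orient {a, b}"] by simp
  then obtain c d where cd: "orient {a, b} = [c, d]"
    by (cases "orient {a, b}"; cases "tl (orient {a, b})") auto
  then show ?thesis using d ab by (auto simp: doubleton_eq_iff)
qed

lemma relsign_nz: "relsign xs ys \<noteq> 0"
  by (simp add: relsign_def)

lemma relsign1: "relsign [a] [a] = 1"
proof -
  have "{(i, j). i < j \<and> j < length [a] \<and> (\<exists>k l. l < k \<and> k < length [a] \<and> [a] ! k = [a] ! i \<and> [a] ! l = [a] ! j)} = {}"
    by auto
  then show ?thesis unfolding relsign_def by (simp only:) simp
qed

lemma relsign2: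
  assumes cd: "c \<noteq> d" and eq: "{p, q} = {c, d}"
  shows "relsign [p, q] [c, d] = (if p = c then 1 else -1)"
proof (cases "p = c")
  case True
  then have q: "q = d" using eq cd by (auto simp: doubleton_eq_iff)
  have E: "{(i, j). i < j \<and> j < length [p, q] \<and> (\<exists>k l. l < k \<and> k < length [c, d] \<and> [c, d] ! k = [p, q] ! i \<and> [c, d] ! l = [p, q] ! j)} = {}"
    using True q cd by (auto simp: less_Suc_eq numeral_2_eq_2)
  show ?thesis unfolding relsign_def E using True by simp
next
  case False
  then have pq: "p = d" "q = c" using eq cd by (auto simp: doubleton_eq_iff)
  have E: "{(i, j). i < j \<and> j < length [p, q] \<and> (\<exists>k l. l < k \<and> k < length [c, d] \<and> [c, d] ! k = [p, q] ! i \<and> [c, d] ! l = [p, q] ! j)} = {(0, 1)}"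
  proof
    show "{(0, 1)} \<subseteq> {(i, j). i < j \<and> j < length [p, q] \<and> (\<exists>k l. l < k \<and> k < length [c, d] \<and> [c, d] ! k = [p, q] ! i \<and> [c, d] ! l = [p, q] ! j)}"
    proof -
      have "(0::nat) < 1 \<and> (1::nat) < length [p, q] \<and> (0::nat) < 1 \<and> (1::nat) < length [c, d] \<and>
        [c, d] ! 1 = [p, q] ! 0 \<and> [c, d] ! 0 = [p, q] ! 1" using pq by simp
      then show ?thesis by blast
    qed
  qed (use pq cd in \<open>auto simp: less_Suc_eq numeral_2_eq_2\<close>)
  show ?thesis unfolding relsign_def E using False by simp
qed

definition bl2 :: "'a list \<Rightarrow> 'a \<Rightarrow> rat" where
  "bl2 xs u = (if u = xs ! 1 then 1 else 0) - (if u = xs ! 0 then 1 else 0)"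

lemma bl2_simp: "bl2 [a, b] u = (if u = b then 1 else 0) - (if u = a then 1 else 0)"
  by (simp add: bl2_def)

lemma remove_nth_simps:
  "remove_nth 0 [a, b] = [b]" "remove_nth 1 [a, b] = [a]"
  "remove_nth 0 [a, b, c] = [b, c]" "remove_nth 1 [a, b, c] = [a, c]" "remove_nth 2 [a, b, c] = [a, b]"
  by (simp_all add: remove_nth_def numeral_2_eq_2)

lemma simp_bd_edge:
  assumes o: "orient s = [a, b]" and ab: "a \<noteq> b"
  shows "simp_bd q s {u} = bl2 [a, b] u"
  unfolding simp_bd_def o by (simp add: remove_nth_def orient1 relsign1 bl2_simp)

lemma sum3: "(\<Sum>i<(3::nat). g i) = g 0 + g 1 + (g 2 :: rat)"
  by (simp add: eval_nat_numeral)
lemma sum2: "(\<Sum>i<(2::nat). g i) = g 0 + (g 1 :: rat)"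
  by (simp add: eval_nat_numeral)

lemma simp_bd_tri:
  assumes o: "orient s = [p, q, r]"
  shows "simp_bd k s t = (if t = {q, r} then relsign [q, r] (orient t) else 0)
     - (if t = {p, r} then relsign [p, r] (orient t) else 0)
     + (if t = {p, q} then relsign [p, q] (orient t) else 0)"
  by (simp only: simp_bd_def o length_Cons list.size(3) sum.lessThan_Suc lessThan_0 sum.empty)
     (simp add: remove_nth_def)


lemma three_elems:
  assumes fs: "finite s" and c: "3 \<le> card s"
  shows "\<exists>a b c. a \<in> s \<and> b \<in> s \<and> c \<in> s \<and> a \<noteq> b \<and> b \<noteq> c \<and> a \<noteq> c"
proof -
  have "s \<noteq> {}" using c by auto
  then obtain a where a: "a \<in> s" by auto
  have c1: "2 \<le> card (s - {a})" using c a fs by (simp add: card_Diff_singleton)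
  then have "s - {a} \<noteq> {}" by (metis card.empty not_numeral_le_zero)
  then obtain b where b: "b \<in> s - {a}" by auto
  have "1 \<le> card (s - {a} - {b})" using c1 b fs by (simp add: card_Diff_singleton)
  then have "s - {a} - {b} \<noteq> {}" by (metis card.empty not_one_le_zero)
  then obtain c where c: "c \<in> s - {a} - {b}" by auto
  show ?thesis using a b c by blast
qed

locale scyc =
  fixes X :: "'a set" and adj :: "'a \<Rightarrow> 'a \<Rightarrow> bool" and n :: nat and x :: "nat \<Rightarrow> 'a"
  assumes dc: "digital_cycle X adj n x" and n3: "3 \<le> n"
begin

lemma n0: "0 < n" using n3 by simp
lemma inj: "inj_on x {..<n}" using dc_inj[OF dc] .
lemma X_eq: "X = x ` {..<n}" using dc_X[OF dc] .
lemma xe: "p < n \<Longrightarrow> q < n \<Longrightarrow> x p = x q \<longleftrightarrow> p = q" using x_eq[OF inj] by blast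
lemma nxl: "Suc i mod n < n" using n0 by simp
lemma xne: "i < n \<Longrightarrow> x i \<noteq> x (Suc i mod n)"
  using xe[of i "Suc i mod n"] nxl nx_ne[of n i] n3 by auto

definition sv :: "nat \<Rightarrow> 'a set" where "sv k = {x k}"
definition se :: "nat \<Rightarrow> 'a set" where "se i = {x i, x (Suc i mod n)}"
definition sor :: "nat \<Rightarrow> rat" where
  "sor i = (if orient (se i) = [x i, x (Suc i mod n)] then 1 else -1)"

lemma sor1: "sor i = 1 \<or> sor i = -1" by (simp add: sor_def)

lemma se_orient: "i < n \<Longrightarrow> orient (se i) =
   (if sor i = 1 then [x i, x (Suc i mod n)] else [x (Suc i mod n), x i])"
  using orient2[OF xne[of i]] by (auto simp: sor_def se_def)

lemma S0: "simplices X adj 0 = sv ` {..<n}"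
proof
  show "simplices X adj 0 \<subseteq> sv ` {..<n}"
  proof
    fix s assume "s \<in> simplices X adj 0"
    then have "s \<subseteq> X" "card s = 1" by (auto simp: simplices_def)
    then obtain a where "s = {a}" "a \<in> X" by (auto simp: card_1_singleton_iff)
    then show "s \<in> sv ` {..<n}" using X_eq by (auto simp: sv_def)
  qed
  show "sv ` {..<n} \<subseteq> simplices X adj 0"
    using X_eq by (auto simp: simplices_def sv_def)
qed

lemma S1: "simplices X adj 1 = se ` {..<n}"
proof
  show "simplices X adj 1 \<subseteq> se ` {..<n}"
  proof
    fix s assume s: "s \<in> simplices X adj 1"
    then have "card s = 2" by (simp add: simplices_def)
    then obtain a b where ab: "s = {a, b}" "a \<noteq> b" by (auto simp: card_2_iff)
    have "a \<in> X" "b \<in> X" using s ab by (auto simp: simplices_def)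
    then obtain i j where ij: "i < n" "j < n" "a = x i" "b = x j" using X_eq by auto
    have "adj a b" using s ab by (auto simp: simplices_def)
    then have "j = Suc i mod n \<or> i = Suc j mod n" using dc_adj[OF dc ij(1,2)] ij by simp
    then have "s = se i \<or> s = se j" using ab ij by (auto simp: se_def insert_commute)
    then show "s \<in> se ` {..<n}" using ij by auto
  qed
  show "se ` {..<n} \<subseteq> simplices X adj 1"
  proof
    fix s assume "s \<in> se ` {..<n}"
    then obtain i where i: "i < n" "s = se i" by auto
    have a1: "adj (x i) (x (Suc i mod n))" using dc_adj[OF dc i(1) nxl] by simp
    have a2: "adj (x (Suc i mod n)) (x i)" using dc_adj[OF dc nxl i(1)] by simp
    show "s \<in> simplices X adj 1"
      using i xne[OF i(1)] X_eq nxl a1 a2 by (auto simp: simplices_def se_def)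
  qed
qed

lemma sv_inj: "inj_on sv {..<n}"
  using xe by (auto simp: inj_on_def sv_def)

lemma se_inj: "inj_on se {..<n}"
  unfolding inj_on_def se_def using pair_idx[OF n3 inj] by auto

lemma bd1: "i < n \<Longrightarrow> k < n \<Longrightarrow> simp_bd 1 (se i) (sv k) =
   sor i * ((if k = Suc i mod n then 1 else 0) - (if k = i then 1 else 0))"
proof -
  assume i: "i < n" and k: "k < n"
  show ?thesis
  proof (cases "sor i = 1")
    case True
    then have "orient (se i) = [x i, x (Suc i mod n)]" using se_orient[OF i] by simp
    then have "simp_bd 1 (se i) (sv k) = bl2 [x i, x (Suc i mod n)] (x k)"
      unfolding sv_def by (rule simp_bd_edge) (rule xne[OF i])
    then show ?thesis using True xe[OF k nxl, of i] xe[OF k i] by (simp add: bl2_simp)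
  next
    case False
    then have F: "sor i = -1" using sor1 by auto
    then have "orient (se i) = [x (Suc i mod n), x i]" using se_orient[OF i] by simp
    then have "simp_bd 1 (se i) (sv k) = bl2 [x (Suc i mod n), x i] (x k)"
      unfolding sv_def by (rule simp_bd_edge) (use xne[OF i] in auto)
    then show ?thesis using F xe[OF k nxl, of i] xe[OF k i] by (simp add: bl2_simp)
  qed
qed

lemma cyc_inst: "cyc n (simplices X adj) simp_bd sv se sor"
proof (unfold_locales)
  show "3 \<le> n" by (rule n3)
  show "inj_on sv {..<n}" by (rule sv_inj)
  show "simplices X adj 0 = sv ` {..<n}" by (rule S0)
  show "inj_on se {..<n}" by (rule se_inj)
  show "simplices X adj 1 = se ` {..<n}" by (rule S1)
  show "\<And>i. i < n \<Longrightarrow> sor i = 1 \<or> sor i = -1" by (rule sor1)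
  show "\<And>i k. i < n \<Longrightarrow> k < n \<Longrightarrow> simp_bd 1 (se i) (sv k) =
   sor i * ((if k = Suc i mod n then 1 else 0) - (if k = i then 1 else 0))" by (rule bd1)
qed

lemma cardX: "card X = n"
  using X_eq inj by (simp add: card_image)

lemma S_high:
  assumes n4: "4 \<le> n" and q: "2 \<le> q"
  shows "simplices X adj q = {}"
proof (rule ccontr)
  assume "simplices X adj q \<noteq> {}"
  then obtain s where s: "s \<in> simplices X adj q" by auto
  then have fs: "finite s" and cs: "card s = Suc q" and sX: "s \<subseteq> X"
    and pa: "\<forall>a\<in>s. \<forall>b\<in>s. a \<noteq> b \<longrightarrow> adj a b" by (auto simp: simplices_def)
  have "3 \<le> card s" using cs q by simp
  then obtain a b c where abc: "a \<in> s" "b \<in> s" "c \<in> s" "a \<noteq> b" "b \<noteq> c" "a \<noteq> c"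
    using three_elems[OF fs] by blast
  have "a \<in> X" "b \<in> X" "c \<in> X" using abc sX by auto
  then obtain i j k where ijk: "i < n" "j < n" "k < n" "a = x i" "b = x j" "c = x k"
    using X_eq by auto
  have d: "i \<noteq> j" "j \<noteq> k" "i \<noteq> k" using abc ijk by auto
  have "j = Suc i mod n \<or> i = Suc j mod n" using pa abc dc_adj[OF dc ijk(1,2)] ijk by auto
  moreover have "k = Suc j mod n \<or> j = Suc k mod n" using pa abc dc_adj[OF dc ijk(2,3)] ijk by auto
  moreover have "k = Suc i mod n \<or> i = Suc k mod n" using pa abc dc_adj[OF dc ijk(1,3)] ijk by auto
  ultimately show False using tri_idx[OF n4 ijk(1-3) d] by blast
qed

lemma adj3: "n = 3 \<Longrightarrow> a \<in> X \<Longrightarrow> b \<in> X \<Longrightarrow> a \<noteq> b \<Longrightarrow> adj a b"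
proof -
  assume n: "n = 3" and a: "a \<in> X" and b: "b \<in> X" and ab: "a \<noteq> b"
  obtain i j where ij: "i < n" "j < n" "a = x i" "b = x j" using a b X_eq by auto
  have ne: "i \<noteq> j"
  proof
    assume "i = j" then show False using ab ij by simp
  qed
  have i3: "i = 0 \<or> i = 1 \<or> i = 2" using ij n by linarith
  have j3: "j = 0 \<or> j = 1 \<or> j = 2" using ij n by linarith
  have "j = Suc i mod 3 \<or> i = Suc j mod 3" using i3 j3 ne by (elim disjE) simp_all
  then have "j = Suc i mod n \<or> i = Suc j mod n" using n by simp
  then show ?thesis using dc_adj[OF dc ij(1,2)] ij by simp
qed

lemma S2_3: "n = 3 \<Longrightarrow> simplices X adj 2 = {X}"
proof -
  assume n: "n = 3"
  have fX: "finite X" using X_eq by simp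
  show ?thesis
  proof
    show "simplices X adj 2 \<subseteq> {X}"
    proof
      fix s assume "s \<in> simplices X adj 2"
      then have "s \<subseteq> X" "card s = 3" by (auto simp: simplices_def)
      then show "s \<in> {X}" using cardX n fX by (simp add: card_subset_eq)
    qed
    show "{X} \<subseteq> simplices X adj 2" using fX cardX n adj3 by (auto simp: simplices_def)
  qed
qed

lemma S_high3: "n = 3 \<Longrightarrow> 3 \<le> q \<Longrightarrow> simplices X adj q = {}"
proof (rule ccontr)
  assume n: "n = 3" and q: "3 \<le> q" and "simplices X adj q \<noteq> {}"
  then obtain s where "s \<in> simplices X adj q" by auto
  then have "s \<subseteq> X" "card s = Suc q" by (auto simp: simplices_def)
  moreover have "finite X" using X_eq by simp
  ultimately have "Suc q \<le> 3" using card_mono cardX n by metis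
  then show False using q by simp
qed

end


lemma relsign_bl2:
  assumes ab: "a \<noteq> b" and eq: "{p, q} = {a, b}"
  shows "relsign [p, q] [a, b] * bl2 [a, b] u = bl2 [p, q] u"
proof (cases "p = a")
  case True
  then have "q = b" using eq ab by (auto simp: doubleton_eq_iff)
  then show ?thesis using True relsign2[OF ab eq] by simp
next
  case False
  then have "p = b" "q = a" using eq ab by (auto simp: doubleton_eq_iff)
  then show ?thesis using False relsign2[OF ab eq] by (simp add: bl2_simp)
qed

context scyc begin

abbreviation "phi f \<equiv> phi_of n x f"

lemma fc0:
  assumes fX: "f ` X \<subseteq> X" and k: "k < n" and k': "k' < n"
  shows "simp_fc f 0 (sv k) (sv k') = (if k' = phi f k then 1 else 0)"
proof -
  have P: "phi f k < n" "f (x k) = x (phi f k)" using phi_of[OF dc fX k] by auto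
  have e: "({x k'} = {x (phi f k)}) \<longleftrightarrow> k' = phi f k" using xe[OF k' P(1)] by auto
  show ?thesis
    unfolding simp_fc_def sv_def using P e by (auto simp: orient1 relsign1)
qed

definition ai :: "nat \<Rightarrow> 'a" where "ai i = (if sor i = 1 then x i else x (Suc i mod n))"
definition bi :: "nat \<Rightarrow> 'a" where "bi i = (if sor i = 1 then x (Suc i mod n) else x i)"

lemma orient_se: "i < n \<Longrightarrow> orient (se i) = [ai i, bi i]"
  using se_orient by (simp add: ai_def bi_def)
lemma se_ab: "i < n \<Longrightarrow> se i = {ai i, bi i}"
  by (auto simp: ai_def bi_def se_def)
lemma ab_ne: "i < n \<Longrightarrow> ai i \<noteq> bi i"
  using xne[of i] by (auto simp: ai_def bi_def)

lemma fc1: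
  assumes fc: "digital_continuous X adj f" and i: "i < n" and j: "j < n"
  shows "simp_fc f 1 (se i) (se j) = sor i * sor j * of_int (Fw n (phi f) i j)"
proof -
  have fX: "f ` X \<subseteq> X" using fc by (simp add: digital_continuous_def)
  have key: "simp_fc f 1 (se i) (se j) =
     (if {f (ai i), f (bi i)} = {ai j, bi j} then (if f (ai i) = ai j then 1 else -1) else 0)"
  proof (cases "{f (ai i), f (bi i)} = {ai j, bi j}")
    case True
    have ne: "f (ai i) \<noteq> f (bi i)"
    proof
      assume "f (ai i) = f (bi i)"
      then have "{ai j, bi j} = {f (ai i)}" using True by simp
      then show False using ab_ne[OF j] by (auto simp: doubleton_eq_iff)
    qed
    have "card (f ` se i) = Suc 1" using ne se_ab[OF i] by simp
    moreover have "se j = f ` se i" using True se_ab i j by simp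
    moreover have "relsign (map f (orient (se i))) (orient (se j)) = (if f (ai i) = ai j then 1 else -1)"
      using orient_se[OF i] orient_se[OF j] relsign2[OF ab_ne[OF j] True] by simp
    ultimately show ?thesis unfolding simp_fc_def using True by simp
  next
    case False
    then have "se j \<noteq> f ` se i" using se_ab i j by auto
    then show ?thesis unfolding simp_fc_def using False by simp
  qed
  have fx: "\<And>k. k < n \<Longrightarrow> f (x k) = x (phi f k)" using phi_of[OF dc fX] by blast
  show ?thesis
    unfolding key ai_def bi_def
    by (rule fcform[OF n3 inj ccont_phi[OF n3 dc fc] fx i j sor1 sor1])
qed

lemma val_hollow:
  assumes fc: "digital_continuous X adj f" and n4: "4 \<le> n"
  shows "simp_lefschetz X adj f = 1 - of_int (deg n (phi f))"
proof -
  have fX: "f ` X \<subseteq> X" using fc by (simp add: digital_continuous_def)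
  interpret C: cyc n "simplices X adj" simp_bd sv se sor by (rule cyc_inst)
  show ?thesis
    unfolding simp_lefschetz_def
  proof (rule C.hollow)
    show "ccont n (phi f)" by (rule ccont_phi[OF n3 dc fc])
    show "simp_fc f 0 (sv k) (sv k') = (if k' = phi f k then 1 else 0)" if "k < n" "k' < n" for k k'
      using fc0[OF fX that] .
    show "simp_fc f 1 (se i) (se j) = sor i * sor j * of_int (Fw n (phi f) i j)" if "i < n" "j < n" for i j
      using fc1[OF fc that] .
    show "simplices X adj q = {}" if "2 \<le> q" for q using S_high[OF n4 that] .
    show "1 \<le> card X" using cardX n3 by simp
  qed
qed

lemma val_filled:
  assumes fX: "f ` X \<subseteq> X" and n3': "n = 3"
  shows "simp_lefschetz X adj f = 1"
proof -
  interpret C: cyc n "simplices X adj" simp_bd sv se sor by (rule cyc_inst)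
  have fin: "finite X" using X_eq by simp
  have oX: "distinct (orient X) \<and> set (orient X) = X" using orient_props[OF fin] .
  then have "length (orient X) = 3" using cardX n3' distinct_card[of "orient X"] by simp
  then obtain p q r where L: "orient X = [p, q, r]"
    by (cases "orient X"; cases "tl (orient X)"; cases "tl (tl (orient X))") auto
  have pqr: "p \<noteq> q" "q \<noteq> r" "p \<noteq> r" using oX L by auto
  have XL: "X = {p, q, r}" using oX L by auto
  have in1: "{a, b} \<in> simplices X adj 1" if "a \<in> X" "b \<in> X" "a \<noteq> b" for a b
    using that adj3[OF n3'] by (auto simp: simplices_def)
  have qr: "{q, r} \<in> simplices X adj 1" and pr: "{p, r} \<in> simplices X adj 1"
    and pq: "{p, q} \<in> simplices X adj 1" using in1 XL pqr by auto
  have prod: "simp_bd 2 X t * simp_bd 1 t {u} = (if t = {q, r} then bl2 [q, r] u else 0)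
     - (if t = {p, r} then bl2 [p, r] u else 0) + (if t = {p, q} then bl2 [p, q] u else 0)"
    if t: "t \<in> simplices X adj 1" for t u
  proof -
    obtain i where i: "i < n" "t = se i" using t S1 by auto
    have o: "orient t = [ai i, bi i]" and tab: "t = {ai i, bi i}" and ne: "ai i \<noteq> bi i"
      using orient_se[OF i(1)] se_ab[OF i(1)] ab_ne[OF i(1)] i by auto
    have b1: "simp_bd 1 t {u} = bl2 [ai i, bi i] u" by (rule simp_bd_edge[OF o ne])
    show ?thesis
      unfolding simp_bd_tri[OF L] b1 o using relsign_bl2[OF ne] tab
      by (auto simp: algebra_simps)
  qed
  show ?thesis
    unfolding simp_lefschetz_def
  proof (rule C.filled[where T = X])
    show "\<And>k. k < n \<Longrightarrow> phi f k < n" using phi_of[OF dc fX] by blast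
    show "simp_fc f 0 (sv k) (sv k') = (if k' = phi f k then 1 else 0)" if "k < n" "k' < n" for k k'
      using fc0[OF fX that] .
    show "simplices X adj 2 = {X}" using S2_3[OF n3'] .
    show "simplices X adj q = {}" if "3 \<le> q" for q using S_high3[OF n3' that] .
    show "2 \<le> card X" using cardX n3' by simp
    show "(\<Sum>i<n. simp_bd 2 X (se i) * simp_bd 1 (se i) (sv k)) = 0" if k: "k < n" for k
    proof -
      have fin1: "finite (simplices X adj 1)" using S1 by simp
      have "(\<Sum>i<n. simp_bd 2 X (se i) * simp_bd 1 (se i) (sv k)) =
          (\<Sum>t\<in>simplices X adj 1. simp_bd 2 X t * simp_bd 1 t {x k})"
        unfolding S1 by (simp add: sum.reindex[OF se_inj] sv_def)
      also have "\<dots> = (\<Sum>t\<in>simplices X adj 1. (if t = {q, r} then bl2 [q, r] (x k) else 0)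
           - (if t = {p, r} then bl2 [p, r] (x k) else 0) + (if t = {p, q} then bl2 [p, q] (x k) else 0))"
        using prod by (intro sum.cong) auto
      also have "\<dots> = bl2 [q, r] (x k) - bl2 [p, r] (x k) + bl2 [p, q] (x k)"
        using fin1 qr pr pq by (simp add: sum.distrib sum_subtractf)
      also have "\<dots> = 0" by (simp add: bl2_simp)
      finally show ?thesis .
    qed
    show "\<exists>i<n. simp_bd 2 X (se i) \<noteq> 0"
    proof (intro exI conjI)
      show "0 < n" by (rule n0)
      have s0: "se 0 \<in> simplices X adj 1" using S1 n0 by auto
      have "se 0 \<subseteq> {p, q, r}" "card (se 0) = 2" using s0 XL by (auto simp: simplices_def)
      then obtain a b where ab: "se 0 = {a, b}" "a \<noteq> b" "a \<in> {p, q, r}" "b \<in> {p, q, r}"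
        by (auto simp: card_2_iff)
      show "simp_bd 2 X (se 0) \<noteq> 0"
        unfolding simp_bd_tri[OF L] ab(1) using ab(2-4) pqr relsign_nz
        by (auto simp: doubleton_eq_iff)
    qed
  qed
qed

lemma part_i:
  assumes fc: "digital_continuous X adj f"
  shows "simp_lefschetz X adj f \<in> {0, 1, 2}"
proof (cases "n = 3")
  case True
  then show ?thesis using val_filled fc by (simp add: digital_continuous_def)
next
  case False
  then have n4: "4 \<le> n" using n3 by simp
  have "deg n (phi f) \<in> {-1, 0, 1}" using deg_range[OF n3 ccont_phi[OF n3 dc fc]] .
  then show ?thesis using val_hollow[OF fc n4] by auto
qed

end


definition up :: "nat \<Rightarrow> int list \<Rightarrow> int list" where "up j a = a[j := a ! j + 1]"

lemma len_up[simp]: "length (up j a) = length a" by (simp add: up_def)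
lemma up_nth: "i < length a \<Longrightarrow> up j a ! i = (if i = j then a ! i + 1 else a ! i)"
  by (auto simp: up_def nth_list_update)
lemma up_ne: "j < length a \<Longrightarrow> up j a \<noteq> a"
proof
  assume j: "j < length a" and "up j a = a"
  then have "up j a ! j = a ! j" by simp
  then show False using j by (simp add: up_nth)
qed
lemma up_comm: "up j (up k a) = up k (up j a)"
  by (cases "j = k") (auto simp: up_def list_update_swap nth_list_update)

lemma c1_adj_cases:
  assumes "c1_adj u w"
  shows "\<exists>j<length u. w = up j u \<or> u = up j w"
proof -
  obtain k where k: "length u = length w" "k < length u" "\<bar>u ! k - w ! k\<bar> = 1"
    "\<forall>i<length u. i \<noteq> k \<longrightarrow> u ! i = w ! i" using assms by (auto simp: c1_adj_def)
  show ?thesis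
  proof (cases "w ! k = u ! k + 1")
    case True
    have "w = up k u" by (rule nth_equalityI) (use k True in \<open>auto simp: up_nth\<close>)
    then show ?thesis using k by auto
  next
    case False
    then have "u ! k = w ! k + 1" using k by auto
    then have "u = up k w" by (intro nth_equalityI) (use k in \<open>auto simp: up_nth\<close>)
    then show ?thesis using k by auto
  qed
qed

lemma c1_adj_up: "j < length a \<Longrightarrow> c1_adj a (up j a)"
  unfolding c1_adj_def by (intro conjI exI[of _ j]) (auto simp: up_nth)

lemma c1_adj_sym: "c1_adj u w \<Longrightarrow> c1_adj w u"
  unfolding c1_adj_def by (metis abs_minus_commute)

lemma not_c1_adj_diag: "j < length a \<Longrightarrow> k < length a \<Longrightarrow> j \<noteq> k \<Longrightarrow> \<not> c1_adj a (up j (up k a))"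
proof
  assume jk: "j < length a" "k < length a" "j \<noteq> k" and c: "c1_adj a (up j (up k a))"
  then obtain l where l: "l < length a" "\<forall>i<length a. i \<noteq> l \<longrightarrow> a ! i = up j (up k a) ! i"
    by (auto simp: c1_adj_def)
  show False
  proof (cases "j = l")
    case False
    then have "a ! j = up j (up k a) ! j" using l jk by auto
    then show False using jk by (simp add: up_nth)
  next
    case True
    then have "k \<noteq> l" using jk by simp
    then have "a ! k = up j (up k a) ! k" using l jk by auto
    then show False using jk by (simp add: up_nth)
  qed
qed

lemma not_c1_adj_anti: "j < length a \<Longrightarrow> k < length a \<Longrightarrow> j \<noteq> k \<Longrightarrow> \<not> c1_adj (up j a) (up k a)"
proof
  assume jk: "j < length a" "k < length a" "j \<noteq> k" and c: "c1_adj (up j a) (up k a)"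
  then obtain l where l: "l < length a" "\<forall>i<length a. i \<noteq> l \<longrightarrow> up j a ! i = up k a ! i"
    by (auto simp: c1_adj_def)
  show False
  proof (cases "j = l")
    case False
    then have "up j a ! j = up k a ! j" using l jk by auto
    then show False using jk by (simp add: up_nth)
  next
    case True
    then have "k \<noteq> l" using jk by simp
    then have "up j a ! k = up k a ! k" using l jk by auto
    then show False using jk by (simp add: up_nth)
  qed
qed

lemma cube_pts0: "cube_pts a {} = {a}"
  by (auto simp: cube_pts_def intro: nth_equalityI)

lemma cube_pts1: "j < length a \<Longrightarrow> cube_pts a {j} = {a, up j a}"
proof -
  assume j: "j < length a"
  show ?thesis
  proof
    show "cube_pts a {j} \<subseteq> {a, up j a}"
    proof
      fix p assume p: "p \<in> cube_pts a {j}"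
      then have l: "length p = length a" and c: "\<forall>i<length a. if i \<in> {j} then p ! i = a ! i \<or> p ! i = a ! i + 1 else p ! i = a ! i"
        by (auto simp: cube_pts_def)
      show "p \<in> {a, up j a}"
      proof (cases "p ! j = a ! j")
        case True
        have "p = a"
        proof (rule nth_equalityI)
          show "length p = length a" by (rule l)
          fix i assume "i < length p"
          then show "p ! i = a ! i" using c True l by (cases "i = j") auto
        qed
        then show ?thesis by simp
      next
        case False
        then have "p ! j = a ! j + 1" using c j by auto
        then have pj: "p ! j = a ! j + 1" .
        have "p = up j a"
        proof (intro nth_equalityI)
          show "length p = length (up j a)" using l by simp
          fix i assume "i < length p"
          then show "p ! i = up j a ! i" using c l pj by (cases "i = j") (auto simp: up_nth)
        qed
        then show ?thesis by simp
      qed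
    qed
    show "{a, up j a} \<subseteq> cube_pts a {j}" using j by (auto simp: cube_pts_def up_nth)
  qed
qed

lemma cube_pts2: "j < length a \<Longrightarrow> k < length a \<Longrightarrow> j \<noteq> k \<Longrightarrow>
  cube_pts a {j, k} = {a, up j a, up k a, up j (up k a)}"
proof -
  assume j: "j < length a" and k: "k < length a" and jk: "j \<noteq> k"
  show ?thesis
  proof
    show "cube_pts a {j, k} \<subseteq> {a, up j a, up k a, up j (up k a)}"
    proof
      fix p assume p: "p \<in> cube_pts a {j, k}"
      then have l: "length p = length a" and c: "\<forall>i<length a. if i \<in> {j, k} then p ! i = a ! i \<or> p ! i = a ! i + 1 else p ! i = a ! i"
        by (auto simp: cube_pts_def)
      have cj: "p ! j = a ! j \<or> p ! j = a ! j + 1" and ck: "p ! k = a ! k \<or> p ! k = a ! k + 1"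
        using c j k by auto
      have o: "\<And>i. i < length a \<Longrightarrow> i \<noteq> j \<Longrightarrow> i \<noteq> k \<Longrightarrow> p ! i = a ! i" using c by auto
      from cj ck show "p \<in> {a, up j a, up k a, up j (up k a)}"
      proof (elim disjE)
        assume "p ! j = a ! j" "p ! k = a ! k"
        have "p = a"
        proof (intro nth_equalityI)
          show "length p = length (a)" using l by simp
          fix i assume "i < length p"
          then show "p ! i = (a) ! i" using o l jk \<open>p ! j = a ! j\<close> \<open>p ! k = a ! k\<close> j k by (cases "i = j"; cases "i = k") (auto simp: up_nth)
        qed
        then show ?thesis by simp
      next
        assume "p ! j = a ! j" "p ! k = a ! k + 1"
        have "p = up k a"
        proof (intro nth_equalityI)
          show "length p = length (up k a)" using l by simp
          fix i assume "i < length p"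
          then show "p ! i = (up k a) ! i" using o l jk \<open>p ! j = a ! j\<close> \<open>p ! k = a ! k + 1\<close> j k by (cases "i = j"; cases "i = k") (auto simp: up_nth)
        qed
        then show ?thesis by simp
      next
        assume "p ! j = a ! j + 1" "p ! k = a ! k"
        have "p = up j a"
        proof (intro nth_equalityI)
          show "length p = length (up j a)" using l by simp
          fix i assume "i < length p"
          then show "p ! i = (up j a) ! i" using o l jk \<open>p ! j = a ! j + 1\<close> \<open>p ! k = a ! k\<close> j k by (cases "i = j"; cases "i = k") (auto simp: up_nth)
        qed
        then show ?thesis by simp
      next
        assume "p ! j = a ! j + 1" "p ! k = a ! k + 1"
        have "p = up j (up k a)"
        proof (intro nth_equalityI)
          show "length p = length (up j (up k a))" using l by simp
          fix i assume "i < length p"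
          then show "p ! i = (up j (up k a)) ! i" using o l jk \<open>p ! j = a ! j + 1\<close> \<open>p ! k = a ! k + 1\<close> j k by (cases "i = j"; cases "i = k") (auto simp: up_nth)
        qed
        then show ?thesis by simp
      qed
    qed
    show "{a, up j a, up k a, up j (up k a)} \<subseteq> cube_pts a {j, k}"
      using j k jk by (auto simp: cube_pts_def up_nth)
  qed
qed

lemma cube_pts_mono: "J \<subseteq> K \<Longrightarrow> cube_pts a J \<subseteq> cube_pts a K"
  by (auto simp: cube_pts_def)

lemma cube_pts_min: "p \<in> cube_pts a J \<Longrightarrow> i < length a \<Longrightarrow> a ! i \<le> p ! i"
  by (auto simp: cube_pts_def split: if_splits)

lemma cube_pts_self: "a \<in> cube_pts a J"
  by (simp add: cube_pts_def)

lemma cube_pts_uniq: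
  assumes l: "length a = length b" and J: "J \<subseteq> {..<length a}" and K: "K \<subseteq> {..<length b}"
    and eq: "cube_pts a J = cube_pts b K"
  shows "a = b \<and> J = K"
proof -
  have a_in: "a \<in> cube_pts b K" using eq cube_pts_self by metis
  have b_in: "b \<in> cube_pts a J" using eq cube_pts_self by metis
  have ab: "a = b"
  proof (rule nth_equalityI)
    show "length a = length b" by (rule l)
    fix i assume "i < length a"
    then show "a ! i = b ! i" using cube_pts_min[OF a_in, of i] cube_pts_min[OF b_in, of i] l by simp
  qed
  have "J = K"
  proof
    show "J \<subseteq> K"
    proof
      fix j assume j: "j \<in> J"
      then have jl: "j < length a" using J by auto
      have "up j a \<in> cube_pts a J" using j jl by (auto simp: cube_pts_def up_nth)
      then have "up j a \<in> cube_pts a K" using eq ab by simp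
      then show "j \<in> K" using jl by (auto simp: cube_pts_def up_nth split: if_splits)
    qed
    show "K \<subseteq> J"
    proof
      fix j assume j: "j \<in> K"
      then have jl: "j < length a" using K l by auto
      have "up j a \<in> cube_pts a K" using j jl by (auto simp: cube_pts_def up_nth)
      then have "up j a \<in> cube_pts a J" using eq ab by simp
      then show "j \<in> J" using jl by (auto simp: cube_pts_def up_nth split: if_splits)
    qed
  qed
  then show ?thesis using ab by simp
qed

lemma cube_vertex0: "cube_vertex a J {} = a"
  by (simp add: cube_vertex_def map_nth)

lemma cube_vertex1: "j < length a \<Longrightarrow> cube_vertex a {j} {0} = up j a"
  by (intro nth_equalityI) (auto simp: cube_vertex_def up_nth)

lemma cube_bd1: "cube_bd 1 (a, {j}) (b, {}) = (if b = up j a then 1 else 0) - (if b = a then 1 else 0)"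
  by (simp add: cube_bd_def up_def)


lemma cube_form_0: "cube_form g (a, {}) (b, {}) p R \<longleftrightarrow> p = id \<and> R = {} \<and> g a = b"
  by (auto simp: cube_form_def cube_vertex0)

lemma cube_fc0: "cube_fc g 0 (a, {}) (b, {}) = (if g a = b then 1 else 0)"
proof (cases "g a = b")
  case True
  have ex: "\<exists>p R. cube_form g (a, {}) (b, {}) p R" using True by (auto simp: cube_form_0)
  have "(SOME e. \<exists>p R. cube_form g (a, {}) (b, {}) p R \<and> e = of_int (sign p) * (-1) ^ card R) = (1::rat)"
    by (rule some_equality) (auto simp: cube_form_0 True)
  then show ?thesis using True ex by (simp add: cube_fc_def cube_pts0)
next
  case False
  then show ?thesis by (simp add: cube_fc_def cube_pts0)
qed

lemma sub0: "S \<subseteq> {..<Suc 0} \<longleftrightarrow> S = {} \<or> S = {0}"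
  by (auto simp: lessThan_Suc)

lemma cube_form_1:
  assumes ja: "ja < length a" and jb: "jb < length b"
  shows "cube_form g (a, {ja}) (b, {jb}) p R \<longleftrightarrow>
    p = id \<and> ((R = {} \<and> g a = b \<and> g (up ja a) = up jb b) \<or> (R = {0} \<and> g a = up jb b \<and> g (up ja a) = b))"
proof -
  have pid: "p permutes {..<Suc 0} \<longleftrightarrow> p = id" by (simp add: lessThan_Suc)
  have allS: "(\<forall>S\<subseteq>{..<Suc 0}. P S) \<longleftrightarrow> P {} \<and> P {0}" for P by (auto simp: sub0)
  have allS0: "(\<forall>S\<subseteq>{0::nat}. P S) \<longleftrightarrow> P {} \<and> P {0}" for P by (auto simp: subset_singleton_iff)
  have f1: "{i::nat. i = 0 \<and> i \<in> {}} = {}" "{i::nat. i = 0 \<and> i \<in> {0}} = {0}" by auto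
  have f2: "{i::nat. i = 0 \<and> i \<notin> {}} = {0}" "{i::nat. i = 0 \<and> i \<notin> {0}} = {}"
    "{i::nat. i = 0 \<and> (i = 0) = (0 < i)} = {}" by auto
  have e1: "{i. i < Suc 0 \<and> (id i \<in> {}) \<noteq> (i \<in> {})} = {}" by auto
  have e2: "{i. i < Suc 0 \<and> (id i \<in> {0}) \<noteq> (i \<in> {})} = {0}" by auto
  have e3: "{i. i < Suc 0 \<and> (id i \<in> {}) \<noteq> (i \<in> {0})} = {0}" by auto
  have e4: "{i. i < Suc 0 \<and> (id i \<in> {0}) \<noteq> (i \<in> {0})} = {}" by auto
  show ?thesis
  proof (cases "p = id")
    case False
    then show ?thesis by (simp add: cube_form_def pid)
  next
    case True
    show ?thesis
    proof (cases "R = {}")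
      case R: True
      show ?thesis unfolding cube_form_def using True R
        by (simp add: pid allS e1 e2 cube_vertex0 cube_vertex1[OF ja] cube_vertex1[OF jb] lessThan_Suc allS0 f1 f2)
    next
      case R: False
      show ?thesis
      proof (cases "R = {0}")
        case R0: True
        show ?thesis unfolding cube_form_def using True R0
          by (simp add: pid allS e3 e4 cube_vertex0 cube_vertex1[OF ja] cube_vertex1[OF jb] lessThan_Suc allS0 f1 f2)
      next
        case R0: False
        then have "\<not> R \<subseteq> {..<Suc 0}" using R by (auto simp: sub0)
        then show ?thesis using R R0 by (auto simp: cube_form_def)
      qed
    qed
  qed
qed

lemma cube_fc1:
  assumes ja: "ja < length a" and jb: "jb < length b"
  shows "cube_fc g 1 (a, {ja}) (b, {jb}) =
    (if {g a, g (up ja a)} = {b, up jb b} then (if g a = b then 1 else -1) else 0)"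
proof -
  have bne: "b \<noteq> up jb b" using up_ne[OF jb] by simp
  have img: "g ` cube_pts a {ja} = {g a, g (up ja a)}" using cube_pts1[OF ja] by simp
  have ptsb: "cube_pts b {jb} = {b, up jb b}" using cube_pts1[OF jb] .
  have cf: "cube_form g (a, {ja}) (b, {jb}) p R \<longleftrightarrow>
    p = id \<and> ((R = {} \<and> g a = b \<and> g (up ja a) = up jb b) \<or> (R = {0} \<and> g a = up jb b \<and> g (up ja a) = b))"
    for p R using cube_form_1[OF ja jb] .
  show ?thesis
  proof (cases "{g a, g (up ja a)} = {b, up jb b}")
    case E: True
    show ?thesis
    proof (cases "g a = b")
      case True
      then have g2: "g (up ja a) = up jb b" using E bne by (auto simp: doubleton_eq_iff)
      have ex: "\<exists>p R. cube_form g (a, {ja}) (b, {jb}) p R" using True g2 cf by blast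
      have "(SOME e. \<exists>p R. cube_form g (a, {ja}) (b, {jb}) p R \<and> e = of_int (sign p) * (-1) ^ card R) = (1::rat)"
        by (rule some_equality) (use True g2 bne in \<open>auto simp: cf\<close>)
      then show ?thesis unfolding cube_fc_def using E ex img ptsb True by simp
    next
      case False
      then have g1: "g a = up jb b" and g2: "g (up ja a) = b" using E bne by (auto simp: doubleton_eq_iff)
      have ex: "\<exists>p R. cube_form g (a, {ja}) (b, {jb}) p R" using g1 g2 cf by blast
      have "(SOME e. \<exists>p R. cube_form g (a, {ja}) (b, {jb}) p R \<and> e = of_int (sign p) * (-1) ^ card R) = (-1::rat)"
        by (rule some_equality) (use False g1 g2 bne in \<open>auto simp: cf\<close>)
      then show ?thesis unfolding cube_fc_def using E ex img ptsb False by simp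
    qed
  next
    case False
    then show ?thesis unfolding cube_fc_def using img ptsb by simp
  qed
qed


locale ccyc =
  fixes Y :: "int list set" and adj :: "int list \<Rightarrow> int list \<Rightarrow> bool" and n :: nat
    and y :: "nat \<Rightarrow> int list" and m :: nat
  assumes dc: "digital_cycle Y adj n y" and n3: "3 \<le> n"
    and lenY: "\<forall>p\<in>Y. length p = m"
    and adjc: "\<forall>u\<in>Y. \<forall>w\<in>Y. adj u w \<longleftrightarrow> c1_adj u w"
begin

lemma n0: "0 < n" using n3 by simp
lemma inj: "inj_on y {..<n}" using dc_inj[OF dc] .
lemma Y_eq: "Y = y ` {..<n}" using dc_X[OF dc] .
lemma ye: "p < n \<Longrightarrow> q < n \<Longrightarrow> y p = y q \<longleftrightarrow> p = q" using x_eq[OF inj] by blast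
lemma nxl: "Suc i mod n < n" using n0 by simp
lemma yne: "i < n \<Longrightarrow> y i \<noteq> y (Suc i mod n)"
  using ye[of i "Suc i mod n"] nxl nx_ne[of n i] n3 by auto
lemma yY: "k < n \<Longrightarrow> y k \<in> Y" using Y_eq by auto
lemma leny: "k < n \<Longrightarrow> length (y k) = m" using lenY yY by auto

lemma cadj: "i < n \<Longrightarrow> j < n \<Longrightarrow> c1_adj (y i) (y j) \<longleftrightarrow> (j = Suc i mod n \<or> i = Suc j mod n)"
  using dc_adj[OF dc] adjc yY by auto

lemma adjy: "i < n \<Longrightarrow> c1_adj (y i) (y (Suc i mod n))"
  using cadj[OF _ nxl] by simp

definition ce :: "nat \<Rightarrow> int list \<times> nat set" where
  "ce i = (SOME c. c \<in> cube_cells m Y 1 \<and> cube_pts (fst c) (snd c) = {y i, y (Suc i mod n)})"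

lemma ce_ex: "i < n \<Longrightarrow> \<exists>c. c \<in> cube_cells m Y 1 \<and> cube_pts (fst c) (snd c) = {y i, y (Suc i mod n)}"
proof -
  assume i: "i < n"
  obtain j where j: "j < length (y i)" "y (Suc i mod n) = up j (y i) \<or> y i = up j (y (Suc i mod n))"
    using c1_adj_cases[OF adjy[OF i]] by blast
  have jm: "j < m" using j leny[OF i] by simp
  show ?thesis
  proof (cases "y (Suc i mod n) = up j (y i)")
    case True
    have "cube_pts (y i) {j} = {y i, y (Suc i mod n)}" using cube_pts1[OF j(1)] True by simp
    moreover have "(y i, {j}) \<in> cube_cells m Y 1"
      using calculation jm leny[OF i] yY[OF i] yY[OF nxl] by (simp add: cube_cells_def)
    ultimately show ?thesis by (intro exI[of _ "(y i, {j})"]) simp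
  next
    case False
    then have F: "y i = up j (y (Suc i mod n))" using j by simp
    have j': "j < length (y (Suc i mod n))" using j leny[OF i] leny[OF nxl] by simp
    have "cube_pts (y (Suc i mod n)) {j} = {y i, y (Suc i mod n)}" using cube_pts1[OF j'] F by auto
    moreover have "(y (Suc i mod n), {j}) \<in> cube_cells m Y 1"
      using calculation jm leny[OF nxl] yY[OF i] yY[OF nxl] by (simp add: cube_cells_def)
    ultimately show ?thesis by (intro exI[of _ "(y (Suc i mod n), {j})"]) simp
  qed
qed

lemma ce_spec: "i < n \<Longrightarrow> ce i \<in> cube_cells m Y 1 \<and> cube_pts (fst (ce i)) (snd (ce i)) = {y i, y (Suc i mod n)}"
  unfolding ce_def by (rule someI_ex) (rule ce_ex)

lemma cell1_form: "c \<in> cube_cells m Y 1 \<Longrightarrow> \<exists>j<m. snd c = {j} \<and> length (fst c) = m"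
  by (auto simp: cube_cells_def card_1_singleton_iff)

definition cj :: "nat \<Rightarrow> nat" where "cj i = (SOME j. j < m \<and> snd (ce i) = {j})"
definition ca :: "nat \<Rightarrow> int list" where "ca i = fst (ce i)"
definition cb :: "nat \<Rightarrow> int list" where "cb i = up (cj i) (ca i)"
definition cor :: "nat \<Rightarrow> rat" where "cor i = (if ca i = y i then 1 else -1)"

lemma cj: "i < n \<Longrightarrow> cj i < m \<and> snd (ce i) = {cj i}"
  unfolding cj_def by (rule someI_ex) (use cell1_form ce_spec in blast)

lemma ce_eq: "i < n \<Longrightarrow> ce i = (ca i, {cj i})"
  using cj by (metis ca_def prod.collapse)

lemma len_ca: "i < n \<Longrightarrow> length (ca i) = m"
  using cell1_form ce_spec unfolding ca_def by blast

lemma ab_pts: "i < n \<Longrightarrow> {ca i, cb i} = {y i, y (Suc i mod n)}"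
proof -
  assume i: "i < n"
  have "cj i < length (ca i)" using cj[OF i] len_ca[OF i] by simp
  then show ?thesis using ce_spec[OF i] ce_eq[OF i] cube_pts1 by (simp add: cb_def)
qed

lemma ab_ne: "i < n \<Longrightarrow> ca i \<noteq> cb i"
proof -
  assume i: "i < n"
  have "cj i < length (ca i)" using cj[OF i] len_ca[OF i] by simp
  then show ?thesis using up_ne[of "cj i" "ca i"] by (auto simp: cb_def)
qed

lemma cor1: "cor i = 1 \<or> cor i = -1" by (simp add: cor_def)

lemma ca_eq: "i < n \<Longrightarrow> ca i = (if cor i = 1 then y i else y (Suc i mod n))"
  using ab_pts[of i] by (auto simp: cor_def doubleton_eq_iff)

lemma cb_eq: "i < n \<Longrightarrow> cb i = (if cor i = 1 then y (Suc i mod n) else y i)"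
  using ab_pts[of i] ab_ne[of i] yne[of i] by (auto simp: cor_def doubleton_eq_iff)

definition cv :: "nat \<Rightarrow> int list \<times> nat set" where "cv k = (y k, {})"

lemma C0: "cube_cells m Y 0 = cv ` {..<n}"
proof
  show "cube_cells m Y 0 \<subseteq> cv ` {..<n}"
  proof
    fix c assume c: "c \<in> cube_cells m Y 0"
    then obtain a J where aJ: "c = (a, J)" "length a = m" "J \<subseteq> {..<m}" "card J = 0" "cube_pts a J \<subseteq> Y"
      by (auto simp: cube_cells_def)
    have "J = {}" using aJ finite_subset[OF aJ(3)] by simp
    then have "a \<in> Y" using aJ cube_pts0 by auto
    then obtain k where "k < n" "a = y k" using Y_eq by auto
    then show "c \<in> cv ` {..<n}" using aJ \<open>J = {}\<close> by (auto simp: cv_def)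
  qed
  show "cv ` {..<n} \<subseteq> cube_cells m Y 0"
    using leny yY by (auto simp: cv_def cube_cells_def cube_pts0)
qed

lemma C1: "cube_cells m Y 1 = ce ` {..<n}"
proof
  show "cube_cells m Y 1 \<subseteq> ce ` {..<n}"
  proof
    fix c assume c: "c \<in> cube_cells m Y 1"
    then obtain j where j: "j < m" "snd c = {j}" "length (fst c) = m" using cell1_form by blast
    let ?a = "fst c"
    have jl: "j < length ?a" using j by simp
    have pts: "cube_pts ?a {j} = {?a, up j ?a}" using cube_pts1[OF jl] .
    have sub: "cube_pts ?a {j} \<subseteq> Y"
    proof -
      obtain a J where cJ: "c = (a, J)" by (cases c)
      then have "cube_pts a J \<subseteq> Y" using c by (simp add: cube_cells_def)
      then show ?thesis using cJ j by simp
    qed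
    then obtain p q where pq: "p < n" "q < n" "?a = y p" "up j ?a = y q" using pts Y_eq by auto
    have "c1_adj (y p) (y q)" using pq c1_adj_up[OF jl] by simp
    then have "q = Suc p mod n \<or> p = Suc q mod n" using cadj pq by simp
    then obtain i where i: "i < n" "{y p, y q} = {y i, y (Suc i mod n)}" using pq by (auto simp: insert_commute)
    have "cube_pts (fst c) (snd c) = cube_pts (fst (ce i)) (snd (ce i))"
      using ce_spec[OF i(1)] pts pq i j by simp
    moreover have "snd (ce i) \<subseteq> {..<length (fst (ce i))}" "length (fst (ce i)) = m"
      using ce_spec[OF i(1)] by (auto simp: cube_cells_def)
    ultimately have "fst c = fst (ce i) \<and> snd c = snd (ce i)"
      using cube_pts_uniq[of "fst c" "fst (ce i)" "snd c" "snd (ce i)"] j by auto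
    then have "c = ce i" by (simp add: prod_eq_iff)
    then show "c \<in> ce ` {..<n}" using i by auto
  qed
  show "ce ` {..<n} \<subseteq> cube_cells m Y 1" using ce_spec by auto
qed

lemma cv_inj: "inj_on cv {..<n}"
  using ye by (auto simp: inj_on_def cv_def)

lemma ce_inj: "inj_on ce {..<n}"
proof (rule inj_onI)
  fix i j assume i: "i \<in> {..<n}" and j: "j \<in> {..<n}" and e: "ce i = ce j"
  then have "{y i, y (Suc i mod n)} = {y j, y (Suc j mod n)}" using ce_spec by (metis lessThan_iff)
  then show "i = j" using pair_idx[OF n3 inj] i j by auto
qed

lemma bd1: "i < n \<Longrightarrow> k < n \<Longrightarrow> cube_bd 1 (ce i) (cv k) =
   cor i * ((if k = Suc i mod n then 1 else 0) - (if k = i then 1 else 0))"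
proof -
  assume i: "i < n" and k: "k < n"
  have "cube_bd 1 (ce i) (cv k) = (if y k = cb i then 1 else 0) - (if y k = ca i then 1 else 0)"
    unfolding ce_eq[OF i] cv_def cube_bd1 cb_def ..
  then show ?thesis using ca_eq[OF i] cb_eq[OF i] cor1[of i] ye[OF k nxl, of i] ye[OF k i] by auto
qed

lemma cyc_inst: "cyc n (cube_cells m Y) cube_bd cv ce cor"
proof (unfold_locales)
  show "3 \<le> n" by (rule n3)
  show "inj_on cv {..<n}" by (rule cv_inj)
  show "cube_cells m Y 0 = cv ` {..<n}" by (rule C0)
  show "inj_on ce {..<n}" by (rule ce_inj)
  show "cube_cells m Y 1 = ce ` {..<n}" by (rule C1)
  show "\<And>i. i < n \<Longrightarrow> cor i = 1 \<or> cor i = -1" by (rule cor1)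
  show "\<And>i k. i < n \<Longrightarrow> k < n \<Longrightarrow> cube_bd 1 (ce i) (cv k) =
   cor i * ((if k = Suc i mod n then 1 else 0) - (if k = i then 1 else 0))" by (rule bd1)
qed

abbreviation "phi g \<equiv> phi_of n y g"

lemma fc0:
  assumes gY: "g ` Y \<subseteq> Y" and k: "k < n" and k': "k' < n"
  shows "cube_fc g 0 (cv k) (cv k') = (if k' = phi g k then 1 else 0)"
proof -
  have P: "phi g k < n" "g (y k) = y (phi g k)" using phi_of[OF dc gY k] by auto
  show ?thesis unfolding cv_def cube_fc0 using P ye[OF P(1) k'] by auto
qed

lemma fc1:
  assumes gc: "digital_continuous Y adj g" and i: "i < n" and j: "j < n"
  shows "cube_fc g 1 (ce i) (ce j) = cor i * cor j * of_int (Fw n (phi g) i j)"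
proof -
  have gY: "g ` Y \<subseteq> Y" using gc by (simp add: digital_continuous_def)
  have li: "cj i < length (ca i)" and lj: "cj j < length (ca j)" using cj len_ca i j by auto
  have key: "cube_fc g 1 (ce i) (ce j) =
     (if {g (ca i), g (cb i)} = {ca j, cb j} then (if g (ca i) = ca j then 1 else -1) else 0)"
    unfolding ce_eq[OF i] ce_eq[OF j] cube_fc1[OF li lj] cb_def ..
  have fx: "\<And>k. k < n \<Longrightarrow> g (y k) = y (phi g k)" using phi_of[OF dc gY] by blast
  show ?thesis
    unfolding key ca_eq[OF i] ca_eq[OF j] cb_eq[OF i] cb_eq[OF j]
    by (rule fcform[OF n3 inj ccont_phi[OF n3 dc gc] fx i j cor1 cor1])
qed

end


lemma sum_up: "j < length a \<Longrightarrow> sum_list (up j a) = sum_list a + 1"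
proof (induction a arbitrary: j)
  case Nil then show ?case by simp
next
  case (Cons b a)
  then show ?case by (cases j) (auto simp: up_def)
qed

lemma c1_sum: "c1_adj u w \<Longrightarrow> sum_list w = sum_list u + 1 \<or> sum_list u = sum_list w + 1"
proof -
  assume "c1_adj u w"
  then obtain j where j: "j < length u" "w = up j u \<or> u = up j w" using c1_adj_cases by blast
  have "length u = length w" using \<open>c1_adj u w\<close> by (simp add: c1_adj_def)
  then show ?thesis using j sum_up by auto
qed

lemma up_up_ne: "j < length a \<Longrightarrow> k < length a \<Longrightarrow> up j (up k a) \<noteq> a"
proof
  assume j: "j < length a" and k: "k < length a" and e: "up j (up k a) = a"
  have "sum_list (up j (up k a)) = sum_list a + 2" using sum_up j k by simp
  then show False using e by simp
qed

lemma up_anti_ne: "j < length a \<Longrightarrow> j \<noteq> k \<Longrightarrow> up j a \<noteq> up k a"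
proof
  assume j: "j < length a" and jk: "j \<noteq> k" and e: "up j a = up k a"
  then have "up j a ! j = up k a ! j" by simp
  then show False using j jk by (simp add: up_nth)
qed

context ccyc begin

lemma n_even: "even n"
proof -
  have ev: "even (sum_list (y k) - sum_list (y 0) + int k)" if "k < n" for k
    using that
  proof (induction k)
    case 0 then show ?case by simp
  next
    case (Suc k)
    have kn: "k < n" using Suc.prems by simp
    have "Suc k mod n = Suc k" using Suc.prems by simp
    then have "c1_adj (y k) (y (Suc k))" using adjy[OF kn] by simp
    then have "sum_list (y (Suc k)) = sum_list (y k) + 1 \<or> sum_list (y k) = sum_list (y (Suc k)) + 1"
      by (rule c1_sum)
    then show ?case using Suc.IH[OF kn] by auto
  qed
  have nn: "n - 1 < n" using n0 by simp
  have "Suc (n - 1) mod n = 0" using n0 by simp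
  then have "c1_adj (y (n - 1)) (y 0)" using adjy[OF nn] by simp
  then have "sum_list (y 0) = sum_list (y (n - 1)) + 1 \<or> sum_list (y (n - 1)) = sum_list (y 0) + 1"
    by (rule c1_sum)
  moreover have "even (sum_list (y (n - 1)) - sum_list (y 0) + int (n - 1))" using ev[OF nn] .
  ultimately have D: "sum_list (y (n - 1)) - sum_list (y 0) = -1 \<or> sum_list (y (n - 1)) - sum_list (y 0) = 1"
    and EV: "even (sum_list (y (n - 1)) - sum_list (y 0) + int (n - 1))" by linarith+
  from D have "odd (int (n - 1))"
  proof
    assume "sum_list (y (n - 1)) - sum_list (y 0) = -1"
    then have "even (-1 + int (n - 1))" using EV by simp
    then show ?thesis by simp
  next
    assume "sum_list (y (n - 1)) - sum_list (y 0) = 1"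
    then have "even (1 + int (n - 1))" using EV by simp
    then show ?thesis by simp
  qed
  then have "odd (n - 1)" by simp
  then show ?thesis using n0 by (cases n) auto
qed

lemma yidx: "p \<in> Y \<Longrightarrow> \<exists>i<n. p = y i" using Y_eq by auto

lemma no_sq:
  assumes n4: "n \<noteq> 4" and a: "length a = m" and j: "j < m" and k: "k < m" and jk: "j \<noteq> k"
    and sub: "cube_pts a {j, k} \<subseteq> Y"
  shows False
proof -
  have jl: "j < length a" and kl: "k < length a" using a j k by auto
  have pts: "cube_pts a {j, k} = {a, up j a, up k a, up j (up k a)}" using cube_pts2[OF jl kl jk] .
  obtain i0 where i0: "i0 < n" "a = y i0" using yidx sub pts by auto
  obtain i1 where i1: "i1 < n" "up j a = y i1" using yidx sub pts by auto
  obtain i2 where i2: "i2 < n" "up j (up k a) = y i2" using yidx sub pts by auto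
  obtain i3 where i3: "i3 < n" "up k a = y i3" using yidx sub pts by auto
  have a01: "c1_adj (y i0) (y i1)" using c1_adj_up[OF jl] i0 i1 by simp
  have "c1_adj (up j a) (up k (up j a))" by (rule c1_adj_up) (simp add: kl)
  then have a12: "c1_adj (y i1) (y i2)" unfolding i1(2)[symmetric] i2(2)[symmetric] up_comm[of j k] .
  have "c1_adj (up k a) (up j (up k a))" by (rule c1_adj_up) (simp add: jl)
  then have a23: "c1_adj (y i2) (y i3)" unfolding i3(2)[symmetric] i2(2)[symmetric] by (rule c1_adj_sym)
  have a30: "c1_adj (y i3) (y i0)" using c1_adj_sym[OF c1_adj_up[OF kl]] i0 i3 by simp
  have d02: "i0 \<noteq> i2" using up_up_ne[OF jl kl] i0 i2 by auto
  have d13: "i1 \<noteq> i3" using up_anti_ne[OF jl jk] i1 i3 by auto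
  have "n = 4"
    using c4_idx[OF n3 i0(1) i1(1) i2(1) i3(1) d02 d13] a01 a12 a23 a30
      cadj[OF i0(1) i1(1)] cadj[OF i1(1) i2(1)] cadj[OF i2(1) i3(1)] cadj[OF i3(1) i0(1)] by blast
  then show False using n4 by simp
qed

lemma two_in: "finite J \<Longrightarrow> 2 \<le> card J \<Longrightarrow> \<exists>j k. j \<in> J \<and> k \<in> J \<and> j \<noteq> k"
proof -
  assume fJ: "finite J" and c: "2 \<le> card J"
  then have "J \<noteq> {}" by auto
  then obtain a where a: "a \<in> J" by auto
  have "1 \<le> card (J - {a})" using c a fJ by (simp add: card_Diff_singleton)
  then have "J - {a} \<noteq> {}" by (metis card.empty not_one_le_zero)
  then obtain b where "b \<in> J - {a}" by auto
  then show ?thesis using a by blast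
qed

lemma no_high:
  assumes n4: "n \<noteq> 4" and q: "2 \<le> q"
  shows "cube_cells m Y q = {}"
proof (rule ccontr)
  assume "cube_cells m Y q \<noteq> {}"
  then obtain a J where c: "(a, J) \<in> cube_cells m Y q" by auto
  then have a: "length a = m" and J: "J \<subseteq> {..<m}" and cJ: "card J = q" and sub: "cube_pts a J \<subseteq> Y"
    by (auto simp: cube_cells_def)
  have fJ: "finite J" using J finite_subset by blast
  obtain j k where jk: "j \<in> J" "k \<in> J" "j \<noteq> k" using two_in[OF fJ] cJ q by auto
  have "cube_pts a {j, k} \<subseteq> Y" using cube_pts_mono[of "{j, k}" J a] jk sub by auto
  then show False using no_sq[OF n4 a _ _ jk(3)] jk J by auto
qed

lemma m_pos: "1 \<le> m"
proof -
  obtain j where "j < length (y 0)" "y (Suc 0 mod n) = up j (y 0) \<or> y 0 = up j (y (Suc 0 mod n))"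
    using c1_adj_cases[OF adjy[OF n0]] by blast
  then show ?thesis using leny[OF n0] by simp
qed

lemma val_hollow:
  assumes gc: "digital_continuous Y adj g" and n4: "n \<noteq> 4"
  shows "cube_lefschetz m Y g = 1 - of_int (deg n (phi g))"
proof -
  have gY: "g ` Y \<subseteq> Y" using gc by (simp add: digital_continuous_def)
  interpret C: cyc n "cube_cells m Y" cube_bd cv ce cor by (rule cyc_inst)
  show ?thesis
    unfolding cube_lefschetz_def
  proof (rule C.hollow)
    show "ccont n (phi g)" by (rule ccont_phi[OF n3 dc gc])
    show "cube_fc g 0 (cv k) (cv k') = (if k' = phi g k then 1 else 0)" if "k < n" "k' < n" for k k'
      using fc0[OF gY that] .
    show "cube_fc g 1 (ce i) (ce j) = cor i * cor j * of_int (Fw n (phi g) i j)" if "i < n" "j < n" for i j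
      using fc1[OF gc that] .
    show "cube_cells m Y q = {}" if "2 \<le> q" for q using no_high[OF n4 that] .
    show "1 \<le> m" by (rule m_pos)
  qed
qed

lemma val_hollow_simp:
  assumes gc: "digital_continuous Y adj g" and n4: "n \<noteq> 4"
  shows "cube_lefschetz m Y g = simp_lefschetz Y adj g"
proof -
  interpret S: scyc Y adj n y by (unfold_locales) (rule dc, rule n3)
  have "4 \<le> n" using n4 n3 n_even by (cases "n = 3") auto
  then show ?thesis using val_hollow[OF gc n4] S.val_hollow[OF gc] by simp
qed

end


lemma common_nb:
  assumes j: "j < length a" and k: "k < length a" and jk: "j \<noteq> k"
    and c1: "c1_adj (up j a) w" and c2: "c1_adj (up k a) w" and wa: "w \<noteq> a"
  shows "w = up j (up k a)"
proof -
  obtain l1 where l1: "length w = length a" "l1 < length a" "\<forall>i<length a. i \<noteq> l1 \<longrightarrow> up j a ! i = w ! i"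
    using c1 by (auto simp: c1_adj_def)
  obtain l2 where l2: "l2 < length a" "\<forall>i<length a. i \<noteq> l2 \<longrightarrow> up k a ! i = w ! i"
    using c2 by (auto simp: c1_adj_def)
  have hj: "l1 = j \<or> l2 = j"
  proof (rule ccontr)
    assume "\<not> (l1 = j \<or> l2 = j)"
    then have "up j a ! j = w ! j" "up k a ! j = w ! j" using l1 l2 j by auto
    then show False using j jk by (simp add: up_nth)
  qed
  have hk: "l1 = k \<or> l2 = k"
  proof (rule ccontr)
    assume "\<not> (l1 = k \<or> l2 = k)"
    then have "up j a ! k = w ! k" "up k a ! k = w ! k" using l1 l2 k by auto
    then show False using k jk by (simp add: up_nth)
  qed
  show ?thesis
  proof (cases "l1 = j")
    case True
    then have l2k: "l2 = k" using hk jk by auto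
    have "w = a"
    proof (rule nth_equalityI)
      show "length w = length a" by (rule l1(1))
      fix i assume "i < length w"
      then have i: "i < length a" using l1 by simp
      show "w ! i = a ! i"
      proof (cases "i = j")
        case True
        then show ?thesis using l2 l2k jk i by (auto simp: up_nth)
      next
        case False
        then show ?thesis using l1 True i \<open>l1 = j\<close> by (auto simp: up_nth)
      qed
    qed
    then show ?thesis using wa by simp
  next
    case False
    then have l2j: "l2 = j" and l1k: "l1 = k" using hj hk jk by auto
    show ?thesis
    proof (rule nth_equalityI)
      show "length w = length (up j (up k a))" using l1 by simp
      fix i assume "i < length w"
      then have i: "i < length a" using l1 by simp
      show "w ! i = up j (up k a) ! i"
      proof (cases "i = k")
        case True
        then show ?thesis using l2 l2j jk i by (auto simp: up_nth)
      next
        case False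
        then show ?thesis using l1 l1k i jk by (auto simp: up_nth)
      qed
    qed
  qed
qed

lemma four_card:
  assumes j: "j < length b" and k: "k < length b" and jk: "j \<noteq> k"
  shows "card {b, up j b, up k b, up j (up k b)} = 4"
proof -
  have d1: "b \<noteq> up j b" "b \<noteq> up k b" "b \<noteq> up j (up k b)" using up_ne j k up_up_ne by metis+
  have d2: "up j b \<noteq> up k b" using up_anti_ne[OF j jk] .
  have d3: "up j b \<noteq> up j (up k b)"
  proof
    assume "up j b = up j (up k b)"
    then have "up j b ! k = up j (up k b) ! k" by simp
    then show False using k jk by (simp add: up_nth)
  qed
  have d4: "up k b \<noteq> up j (up k b)" using up_ne[of j "up k b"] j by simp
  show ?thesis using d1 d2 d3 d4 by simp
qed

lemma cube_bd2:
  assumes jk: "j < k"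
  shows "cube_bd 2 (a, {j, k}) c = - ((if c = (a, {k}) then 1 else 0) - (if c = (up j a, {k}) then 1 else 0))
     + ((if c = (a, {j}) then 1 else 0) - (if c = (up k a, {j}) then 1 else 0))"
proof -
  have s: "sorted_list_of_set {j, k} = [j, k]" using jk by simp
  have c: "card {j, k} = 2" using jk by simp
  have d1: "{j, k} - {j} = {k}" and d2: "{j, k} - {k} = {j}" using jk by auto
  show ?thesis unfolding cube_bd_def using jk
    by (simp add: s c sum2 d1 d2 up_def Let_def)
qed

lemma lessThan4: "{..<(4::nat)} = {0, 1, 2, 3}" by auto

context ccyc begin

lemma sq_exists:
  assumes n4: "n = 4"
  shows "\<exists>a j k. length a = m \<and> j < k \<and> k < m \<and> cube_pts a {j, k} = Y"
proof -
  let ?S = "(\<lambda>i. sum_list (y i)) ` {..<n}"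
  have "Min ?S \<in> ?S" using n0 by (intro Min_in) auto
  then obtain a0 where a0: "a0 < n" "sum_list (y a0) = Min ?S" by auto
  have amin: "sum_list (y a0) \<le> sum_list (y i)" if "i < n" for i
    using a0 that by simp
  define i1 where "i1 = Suc a0 mod n"
  define i2 where "i2 = Suc i1 mod n"
  define i3 where "i3 = Suc i2 mod n"
  have idx: "i1 < n" "i2 < n" "i3 < n" "Suc i3 mod n = a0" "a0 \<noteq> i2" "i1 \<noteq> i3"
    "y ` {..<n} = {y a0, y i1, y i2, y i3}"
  proof -
    have "a0 = 0 \<or> a0 = 1 \<or> a0 = 2 \<or> a0 = 3" using a0 n4 by linarith
    then have I: "i1 < n \<and> i2 < n \<and> i3 < n \<and> Suc i3 mod n = a0 \<and> a0 \<noteq> i2 \<and> i1 \<noteq> i3 \<and>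
       {..<n} = {a0, i1, i2, i3}"
      unfolding i1_def i2_def i3_def n4 lessThan4 by (elim disjE) auto
    then show "i1 < n" "i2 < n" "i3 < n" "Suc i3 mod n = a0" "a0 \<noteq> i2" "i1 \<noteq> i3" by auto
    show "y ` {..<n} = {y a0, y i1, y i2, y i3}" using I by simp
  qed
  have up_of: "\<exists>j<length (y a0). y i = up j (y a0)" if i: "i < n" and c: "c1_adj (y a0) (y i)" for i
  proof -
    obtain j where j: "j < length (y a0)" "y i = up j (y a0) \<or> y a0 = up j (y i)"
      using c1_adj_cases[OF c] by blast
    have len: "length (y i) = length (y a0)" using leny i a0 by simp
    have "\<not> y a0 = up j (y i)"
    proof
      assume e: "y a0 = up j (y i)"
      have "j < length (y i)" using len j by simp
      then have "sum_list (y a0) = sum_list (y i) + 1" unfolding e by (rule sum_up)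
      then show False using amin[OF i] by simp
    qed
    then show ?thesis using j by auto
  qed
  obtain j where j: "j < length (y a0)" "y i1 = up j (y a0)"
    using up_of[OF idx(1)] adjy[OF a0(1)] unfolding i1_def by blast
  have "c1_adj (y i3) (y a0)" using adjy[OF idx(3)] idx(4) by simp
  then obtain k where k: "k < length (y a0)" "y i3 = up k (y a0)"
    using up_of[OF idx(3)] c1_adj_sym by blast
  have jk: "j \<noteq> k"
  proof
    assume "j = k"
    then have "y i1 = y i3" using j k by simp
    then show False using ye idx by auto
  qed
  have c12: "c1_adj (up j (y a0)) (y i2)" using adjy[OF idx(1)] j unfolding i2_def by simp
  have c32: "c1_adj (up k (y a0)) (y i2)"
    using c1_adj_sym[OF adjy[OF idx(2)]] k unfolding i3_def by simp
  have ne: "y i2 \<noteq> y a0" using ye idx a0 by auto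
  have y2: "y i2 = up j (up k (y a0))" by (rule common_nb[OF j(1) k(1) jk c12 c32 ne])
  have pts: "cube_pts (y a0) {j, k} = Y"
    using cube_pts2[OF j(1) k(1) jk] Y_eq idx(7) j k y2 by auto
  show ?thesis
  proof (cases "j < k")
    case True
    then show ?thesis using pts leny[OF a0(1)] k by blast
  next
    case False
    then have "k < j" using jk by simp
    moreover have "cube_pts (y a0) {k, j} = Y" using pts by (simp add: insert_commute)
    ultimately show ?thesis using leny[OF a0(1)] j by blast
  qed
qed

lemma cardY: "card Y = n" using Y_eq inj by (simp add: card_image)

lemma filled4:
  assumes n4: "n = 4" and gY: "g ` Y \<subseteq> Y"
  shows "cube_lefschetz m Y g = 1"
proof -
  obtain a j k where a: "length a = m" and jk: "j < k" "k < m" and pts: "cube_pts a {j, k} = Y"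
    using sq_exists[OF n4] by blast
  have jl: "j < length a" and kl: "k < length a" and jne: "j \<noteq> k" using a jk by auto
  let ?T = "(a, {j, k})"
  have T_in: "?T \<in> cube_cells m Y 2" using a jk pts by (auto simp: cube_cells_def)
  have fY: "finite Y" using Y_eq by simp
  have pts4: "\<And>b K. (b, K) \<in> cube_cells m Y 2 \<Longrightarrow> cube_pts b K = Y"
  proof -
    fix b K assume bK: "(b, K) \<in> cube_cells m Y 2"
    then have lb: "length b = m" and K: "K \<subseteq> {..<m}" "card K = 2" and sub: "cube_pts b K \<subseteq> Y"
      by (auto simp: cube_cells_def)
    obtain j' k' where K2: "K = {j', k'}" "j' \<noteq> k'" using K by (auto simp: card_2_iff)
    have j'l: "j' < length b" "k' < length b" using K K2 lb by auto
    have "card (cube_pts b K) = 4" using cube_pts2[OF j'l K2(2)] four_card[OF j'l K2(2)] K2 by simp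
    then show "cube_pts b K = Y" using sub cardY n4 fY by (simp add: card_subset_eq)
  qed
  have C2: "cube_cells m Y 2 = {?T}"
  proof
    show "cube_cells m Y 2 \<subseteq> {?T}"
    proof
      fix c assume c: "c \<in> cube_cells m Y 2"
      obtain b K where cK: "c = (b, K)" by (cases c)
      have "cube_pts b K = cube_pts a {j, k}" using pts4 c cK pts by simp
      moreover have "length b = m" "K \<subseteq> {..<m}" using c cK by (auto simp: cube_cells_def)
      ultimately have "b = a \<and> K = {j, k}" using cube_pts_uniq[of b a K "{j, k}"] a jk by auto
      then show "c \<in> {?T}" using cK by simp
    qed
    show "{?T} \<subseteq> cube_cells m Y 2" using T_in by simp
  qed
  have C3: "cube_cells m Y q = {}" if q: "3 \<le> q" for q
  proof (rule ccontr)
    assume "cube_cells m Y q \<noteq> {}"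
    then obtain b K where bK: "(b, K) \<in> cube_cells m Y q" by auto
    then have lb: "length b = m" and K: "K \<subseteq> {..<m}" "card K = q" and sub: "cube_pts b K \<subseteq> Y"
      by (auto simp: cube_cells_def)
    have fK: "finite K" using K finite_subset by blast
    obtain j' k' l' where jkl: "j' \<in> K" "k' \<in> K" "l' \<in> K" "j' \<noteq> k'" "k' \<noteq> l'" "j' \<noteq> l'"
      using three_elems[OF fK] K q by auto
    have j'l: "j' < length b" "k' < length b" "l' < length b" using K jkl lb by auto
    have sub2: "cube_pts b {j', k'} \<subseteq> Y" using cube_pts_mono[of "{j', k'}" K b] jkl sub by auto
    have "card (cube_pts b {j', k'}) = 4" using cube_pts2[OF j'l(1,2) jkl(4)] four_card[OF j'l(1,2) jkl(4)] by simp
    then have eq: "cube_pts b {j', k'} = Y" using sub2 cardY n4 fY by (simp add: card_subset_eq)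
    have "up l' b \<in> cube_pts b K" using jkl j'l by (auto simp: cube_pts_def up_nth)
    then have "up l' b \<in> cube_pts b {j', k'}" using sub eq by auto
    then have "up l' b ! l' = b ! l'" using jkl j'l by (auto simp: cube_pts_def)
    then show False using j'l by (simp add: up_nth)
  qed
  interpret C: cyc n "cube_cells m Y" cube_bd cv ce cor by (rule cyc_inst)
  have face: "(p, {l}) \<in> cube_cells m Y 1" if "length p = m" "l < m" "p \<in> Y" "up l p \<in> Y" for p l
    using that cube_pts1[of l p] by (auto simp: cube_cells_def)
  have Ys: "a \<in> Y" "up j a \<in> Y" "up k a \<in> Y" "up j (up k a) \<in> Y"
    using pts cube_pts2[OF jl kl jne] by auto
  have F1: "(a, {k}) \<in> cube_cells m Y 1" using face a jk Ys by auto
  have F2: "(up j a, {k}) \<in> cube_cells m Y 1" using face[of "up j a" k] a jk Ys up_comm by auto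
  have F3: "(a, {j}) \<in> cube_cells m Y 1" using face a jk Ys by auto
  have F4: "(up k a, {j}) \<in> cube_cells m Y 1" using face[of "up k a" j] a jk Ys by auto
  have fin1: "finite (cube_cells m Y 1)" using C1 by simp
  show ?thesis
    unfolding cube_lefschetz_def
  proof (rule C.filled[where T = ?T])
    show "\<And>k. k < n \<Longrightarrow> phi g k < n" using phi_of[OF dc gY] by blast
    show "cube_fc g 0 (cv k) (cv k') = (if k' = phi g k then 1 else 0)" if "k < n" "k' < n" for k k'
      using fc0[OF gY that] .
    show "cube_cells m Y 2 = {?T}" by (rule C2)
    show "cube_cells m Y q = {}" if "3 \<le> q" for q using C3[OF that] .
    show "2 \<le> m" using jk by simp
    show "(\<Sum>i<n. cube_bd 2 ?T (ce i) * cube_bd 1 (ce i) (cv kk)) = 0" if kk: "kk < n" for kk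
    proof -
      let ?p = "y kk"
      have "(\<Sum>i<n. cube_bd 2 ?T (ce i) * cube_bd 1 (ce i) (cv kk)) =
          (\<Sum>c\<in>cube_cells m Y 1. cube_bd 2 ?T c * cube_bd 1 c (?p, {}))"
        unfolding C1 by (simp add: sum.reindex[OF ce_inj] cv_def)
      also have "\<dots> = (\<Sum>c\<in>cube_cells m Y 1.
            - ((if c = (a, {k}) then cube_bd 1 (a, {k}) (?p, {}) else 0)
               - (if c = (up j a, {k}) then cube_bd 1 (up j a, {k}) (?p, {}) else 0))
            + ((if c = (a, {j}) then cube_bd 1 (a, {j}) (?p, {}) else 0)
               - (if c = (up k a, {j}) then cube_bd 1 (up k a, {j}) (?p, {}) else 0)))"
      proof (intro sum.cong refl)
        fix c
        have im: "\<And>F. (if c = F then 1 else 0) * cube_bd 1 c (?p, {}) = (if c = F then cube_bd 1 F (?p, {}) else 0)"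
          by simp
        show "cube_bd 2 ?T c * cube_bd 1 c (?p, {}) =
            - ((if c = (a, {k}) then cube_bd 1 (a, {k}) (?p, {}) else 0)
               - (if c = (up j a, {k}) then cube_bd 1 (up j a, {k}) (?p, {}) else 0))
            + ((if c = (a, {j}) then cube_bd 1 (a, {j}) (?p, {}) else 0)
               - (if c = (up k a, {j}) then cube_bd 1 (up k a, {j}) (?p, {}) else 0))"
          unfolding cube_bd2[OF jk(1)] im[symmetric] by (simp only: ring_distribs mult_minus_left)
      qed
      also have "\<dots> = - (cube_bd 1 (a, {k}) (?p, {}) - cube_bd 1 (up j a, {k}) (?p, {}))
          + (cube_bd 1 (a, {j}) (?p, {}) - cube_bd 1 (up k a, {j}) (?p, {}))"
        using fin1 F1 F2 F3 F4 by (simp add: sum.distrib sum_subtractf sum_negf)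
      also have "\<dots> = 0" unfolding cube_bd1 by (simp add: up_comm[of k j])
      finally show ?thesis .
    qed
    show "\<exists>i<n. cube_bd 2 ?T (ce i) \<noteq> 0"
    proof -
      obtain i where i: "i < n" "ce i = (a, {j})" using F3 C1 by auto
      have "up k a \<noteq> a" using up_ne[OF kl] .
      then have "cube_bd 2 ?T (a, {j}) = 1" using jne unfolding cube_bd2[OF jk(1)] by auto
      then show ?thesis using i by auto
    qed
  qed
qed

end


theorem proposition4p9:
  shows "(\<forall>(X :: 'a set) (adj :: 'a \<Rightarrow> 'a \<Rightarrow> bool) (n :: nat) (x :: nat \<Rightarrow> 'a) (f :: 'a \<Rightarrow> 'a).
           3 \<le> n \<and> digital_cycle X adj n x \<and> digital_continuous X adj f
           \<longrightarrow> simp_lefschetz X adj f \<in> {0, 1, 2}) \<and>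
         (\<forall>(n :: nat) (m :: nat) (Y :: int list set) (y :: nat \<Rightarrow> int list) (g :: int list \<Rightarrow> int list)
           (adjY :: int list \<Rightarrow> int list \<Rightarrow> bool).
           3 \<le> n \<and> digital_cycle Y adjY n y \<and> m \<le> 3 \<and> (\<forall>p\<in>Y. length p = m) \<and>
           (\<forall>u\<in>Y. \<forall>v\<in>Y. adjY u v \<longleftrightarrow> c1_adj u v) \<and> digital_continuous Y adjY g
           \<longrightarrow> cube_lefschetz m Y g = (if n = 4 then 1 else simp_lefschetz Y adjY g))"
proof (intro conjI allI impI)
  fix X :: "'a set" and adj n x f
  assume A: "3 \<le> n \<and> digital_cycle X adj n x \<and> digital_continuous X adj f"
  interpret S: scyc X adj n x using A by unfold_locales auto
  show "simp_lefschetz X adj f \<in> {0, 1, 2}" using S.part_i A by blast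
next
  fix n m Y y g adjY
  assume A: "3 \<le> n \<and> digital_cycle Y adjY n y \<and> m \<le> 3 \<and> (\<forall>p\<in>Y. length p = m) \<and>
           (\<forall>u\<in>Y. \<forall>v\<in>Y. adjY u v \<longleftrightarrow> c1_adj u v) \<and> digital_continuous Y adjY g"
  interpret C: ccyc Y adjY n y m using A by unfold_locales auto
  have gY: "g ` Y \<subseteq> Y" using A by (simp add: digital_continuous_def)
  show "cube_lefschetz m Y g = (if n = 4 then 1 else simp_lefschetz Y adjY g)"
  proof (cases "n = 4")
    case True
    then show ?thesis using C.filled4[OF True gY] by simp
  next
    case False
    then show ?thesis using C.val_hollow_simp[of g] A by simp
  qed
qed


end
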